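(* Let $\mu$ be a classification problem and $f:\mathcal X\times\mathcal A\to\Delta_k$ a fixed deterministic calibrated predictor such that each $r_a:=f\sharp(\mu^X_a\times\{a\})$ has finite support $\mathcal R_a$. For each $a\in[m]$ let $s_{a,1},\dots,s_{a,n}$ be i.i.d. samples from $r_a$ (independent across $a$), and $\hat r_a=\frac1n\sum_{i=1}^n\delta_{s_{a,i}}$. Let $(\hat q,\hat\gamma_1,\dots,\hat\gamma_m)$ with $\hat q\in\mathcal Q_k$ and $\hat\gamma_a\in\Gamma(\hat r_a,\hat q)$ minimize $\sum_{a\in[m]}\sum_{s,y}\|s-y\|_1\hat\gamma_a(\{(s,y)\})$ over all such tuples. Define the randomized classifier $\hat h$ by: if $s=f(x,a)\in\mathrm{supp}(\hat r_a)$, $\hat h(x,a)=e_i$ with probability $\hat\gamma_a(\{(s,e_i)\})/\hat r_a(\{s\})$; otherwise $\hat h(x,a)$ is an arbitrary fixed label. Let $\mathrm{Err}^*_f:=\frac12\min_{q\in\mathcal Q_k}\sum_a W_1(r_a,q)$. Then for every $\delta\in(0,1)$, with probability at least $1-\delta$ over the samples, $$\sum_{a\in[m]}\mathrm{Err}_a(\hat h)-\mathrm{Err}^*_f\le\sum_{a\in[m]}\sqrt{\frac{2|\mathcal R_a|^2}{n}\ln\frac{2m|\mathcal R_a|}{\delta}}\quad\text{and}\quad\mathrm{DPGap}(\hat h)\le\max_{a\in[m]}\sqrt{\frac{|\mathcal R_a|^2}{2n}\ln\frac{2m|\mathcal R_a|}{\delta}}.$$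
   Context: Setup. $\mathcal X$ is a standard Borel space, $k\ge 2$, $\mathcal Y=\{e_1,\dots,e_k\}\subset\mathbb R^k$ the standard basis vectors, $\mathcal A=[m]$. A classification problem is a probability distribution $\mu$ of $(X,Y,A)$ on $\mathcal X\times\mathcal Y\times\mathcal A$ with $\mathbb P(A=a)>0$ for all $a$; $\mu^X_a$ is the law of $X$ given $A=a$. $\Delta_k=\{x\in\mathbb R^k:x\ge0,\sum_ix_i=1\}$. For a deterministic predictor $f$, $f\sharp(\mu^X_a\times\{a\})$ is the law of $f(X,a)$, $X\sim\mu^X_a$. $f$ is calibrated if for every $a$ and $i$, $\mathbb P_\mu(Y=e_i\mid f(X,A)=s,A=a)=s_i$ for $r_a$-a.e. $s$. A randomized classifier's output randomness is independent of $(X,Y,A)$ and of the samples; $\mathrm{Err}_a(h)=\mathbb P(h(X,a)\ne Y\mid A=a)$ evaluated on the population $\mu$. $\mathrm{DPGap}(h)=\frac12\max_{a,a'}\sum_{y\in\mathcal Y}|\mathbb P(h(X,a)=y\mid A=a)-\mathbb P(h(X,a')=y\mid A=a')|$. $\mathcal Q_k$ is the set of distributions supported on $\mathcal Y$, $\Gamma(p,q)$ the couplings of $p,q$, $W_1(p,q)=\inf_{\gamma\in\Gamma(p,q)}\int\|s-s'\|_1d\gamma$, $\delta_s$ the Dirac mass at $s$. *)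

theory Defs
  imports "HOL-Probability.Probability"
begin

(* Conventions:
   - X is a standard Borel space: a Polish type 'x with its Borel sigma-algebra.
   - Labels: Y = {e_i | i :: 'k}, 'k a finite type with CARD('k) = k; label i stands for e_i.
   - Groups: A = [m] is represented by {..<m} (0-based).
   - A classification problem is a probability measure on 'x * 'k * nat
     whose A-component lies in {..<m}. *)

definition prob_simplex :: "(real^'k::finite) set" where
  "prob_simplex = {s. (\<forall>i. 0 \<le> s $ i) \<and> (\<Sum>i\<in>UNIV. s $ i) = 1}"

definition lab_vec :: "'k::finite \<Rightarrow> real^'k" where
  "lab_vec y = (\<chi> j. if j = y then 1 else 0)"

definition l1norm :: "real^'k::finite \<Rightarrow> real" where
  "l1norm v = (\<Sum>j\<in>UNIV. \<bar>v $ j\<bar>)"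

definition lab_cost :: "real^'k::finite \<Rightarrow> 'k \<Rightarrow> real" where
  "lab_cost s y = l1norm (s - lab_vec y)"

definition Aev :: "('x \<times> 'k \<times> nat) measure \<Rightarrow> nat \<Rightarrow> ('x \<times> 'k \<times> nat) set" where
  "Aev \<mu> a = {z \<in> space \<mu>. snd (snd z) = a}"

definition classif_problem :: "('x::polish_space \<times> 'k::finite \<times> nat) measure \<Rightarrow> nat \<Rightarrow> bool" where
  "classif_problem \<mu> m \<longleftrightarrow> prob_space \<mu>
     \<and> sets \<mu> = sets (borel \<Otimes>\<^sub>M (count_space UNIV \<Otimes>\<^sub>M count_space {..<m}))
     \<and> (\<forall>a<m. measure \<mu> (Aev \<mu> a) > 0)"

definition condA :: "('x \<times> 'k \<times> nat) measure \<Rightarrow> nat \<Rightarrow> ('x \<times> 'k \<times> nat) measure" where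
  "condA \<mu> a = uniform_measure \<mu> (Aev \<mu> a)"

definition pushf :: "('x::topological_space \<times> 'k::finite \<times> nat) measure \<Rightarrow> ('x \<Rightarrow> nat \<Rightarrow> real^'k) \<Rightarrow> nat \<Rightarrow> (real^'k) measure" where
  "pushf \<mu> f a = distr (condA \<mu> a) borel (\<lambda>z. f (fst z) a)"

definition msupport :: "('b::topological_space) measure \<Rightarrow> 'b set" where
  "msupport r = {s. \<forall>U. open U \<and> s \<in> U \<longrightarrow> emeasure r U > 0}"

(* calibration: P(Y = e_i | f(X,A), A = a) = f(X,A)_i, i.e. the defining property of the
   conditional probability w.r.t. sigma(f(X,A), A) *)
definition calibrated :: "('x::topological_space \<times> 'k::finite \<times> nat) measure \<Rightarrow> ('x \<Rightarrow> nat \<Rightarrow> real^'k) \<Rightarrow> nat \<Rightarrow> bool" where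
  "calibrated \<mu> f m \<longleftrightarrow> (\<forall>a<m. \<forall>i. \<forall>B\<in>sets borel.
     measure \<mu> {z \<in> Aev \<mu> a. fst (snd z) = i \<and> f (fst z) a \<in> B}
     = (\<integral>z. indicator {z \<in> Aev \<mu> a. f (fst z) a \<in> B} z * (f (fst z) a $ i) \<partial>\<mu>))"

definition couplings :: "(real^'k::finite) measure \<Rightarrow> 'k pmf \<Rightarrow> ((real^'k) \<times> 'k) measure set" where
  "couplings p q = {\<gamma>. sets \<gamma> = sets (borel \<Otimes>\<^sub>M count_space UNIV)
      \<and> distr \<gamma> borel fst = p \<and> distr \<gamma> (count_space UNIV) snd = measure_pmf q}"

definition W1 :: "(real^'k::finite) measure \<Rightarrow> 'k pmf \<Rightarrow> ennreal" where
  "W1 p q = (INF \<gamma>\<in>couplings p q. \<integral>\<^sup>+ z. ennreal (lab_cost (fst z) (snd z)) \<partial>\<gamma>)"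

definition errstar :: "('x::topological_space \<times> 'k::finite \<times> nat) measure \<Rightarrow> ('x \<Rightarrow> nat \<Rightarrow> real^'k) \<Rightarrow> nat \<Rightarrow> real" where
  "errstar \<mu> f m = 1/2 * (INF q\<in>(UNIV :: 'k pmf set). \<Sum>a<m. enn2real (W1 (pushf \<mu> f a) q))"

definition sample_space :: "('x::topological_space \<times> 'k::finite \<times> nat) measure \<Rightarrow> ('x \<Rightarrow> nat \<Rightarrow> real^'k) \<Rightarrow> nat \<Rightarrow> nat \<Rightarrow> (nat \<Rightarrow> nat \<Rightarrow> real^'k) measure" where
  "sample_space \<mu> f m n = (\<Pi>\<^sub>M a\<in>{..<m}. \<Pi>\<^sub>M i\<in>{..<n}. pushf \<mu> f a)"

definition rhat :: "nat \<Rightarrow> (nat \<Rightarrow> nat \<Rightarrow> real^'k) \<Rightarrow> nat \<Rightarrow> (real^'k) pmf" where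
  "rhat n \<omega> a = map_pmf (\<omega> a) (pmf_of_set {..<n})"

definition feasible :: "(nat \<Rightarrow> (real^'k::finite) pmf) \<Rightarrow> nat \<Rightarrow> 'k pmf \<Rightarrow> (nat \<Rightarrow> ((real^'k) \<times> 'k) pmf) \<Rightarrow> bool" where
  "feasible rh m q \<gamma> \<longleftrightarrow> (\<forall>a<m. map_pmf fst (\<gamma> a) = rh a \<and> map_pmf snd (\<gamma> a) = q)"

definition transport_obj :: "nat \<Rightarrow> (nat \<Rightarrow> ((real^'k::finite) \<times> 'k) pmf) \<Rightarrow> real" where
  "transport_obj m \<gamma> = (\<Sum>a<m. \<Sum>z\<in>set_pmf (\<gamma> a). lab_cost (fst z) (snd z) * pmf (\<gamma> a) z)"

definition is_opt :: "(nat \<Rightarrow> (real^'k::finite) pmf) \<Rightarrow> nat \<Rightarrow> 'k pmf \<Rightarrow> (nat \<Rightarrow> ((real^'k) \<times> 'k) pmf) \<Rightarrow> bool" where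
  "is_opt rh m q \<gamma> \<longleftrightarrow> feasible rh m q \<gamma>
     \<and> (\<forall>q' \<gamma>'. feasible rh m q' \<gamma>' \<longrightarrow> transport_obj m \<gamma> \<le> transport_obj m \<gamma>')"

(* randomized classifier: hhat x a y = probability that hhat(x,a) = e_y *)
definition hhat :: "('x \<Rightarrow> nat \<Rightarrow> real^'k::finite) \<Rightarrow> (nat \<Rightarrow> (real^'k) pmf) \<Rightarrow> (nat \<Rightarrow> ((real^'k) \<times> 'k) pmf) \<Rightarrow> 'k \<Rightarrow> 'x \<Rightarrow> nat \<Rightarrow> 'k \<Rightarrow> real" where
  "hhat f rh \<gamma> y0 x a y = (if f x a \<in> set_pmf (rh a)
      then pmf (\<gamma> a) (f x a, y) / pmf (rh a) (f x a)
      else (if y = y0 then 1 else 0))"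

(* Err_a(h) = P(h(X,a) /= Y | A = a), output randomness independent of (X,Y,A) *)
definition randErr :: "('x \<times> 'k::finite \<times> nat) measure \<Rightarrow> ('x \<Rightarrow> nat \<Rightarrow> 'k \<Rightarrow> real) \<Rightarrow> nat \<Rightarrow> real" where
  "randErr \<mu> h a = (\<integral>z. (\<Sum>y\<in>UNIV - {fst (snd z)}. h (fst z) a y) \<partial>(condA \<mu> a))"

definition predProb :: "('x \<times> 'k::finite \<times> nat) measure \<Rightarrow> ('x \<Rightarrow> nat \<Rightarrow> 'k \<Rightarrow> real) \<Rightarrow> nat \<Rightarrow> 'k \<Rightarrow> real" where
  "predProb \<mu> h a y = (\<integral>z. h (fst z) a y \<partial>(condA \<mu> a))"

definition DPGap :: "('x \<times> 'k::finite \<times> nat) measure \<Rightarrow> ('x \<Rightarrow> nat \<Rightarrow> 'k \<Rightarrow> real) \<Rightarrow> nat \<Rightarrow> real" where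
  "DPGap \<mu> h m = 1/2 * Max {(\<Sum>y\<in>UNIV. \<bar>predProb \<mu> h a y - predProb \<mu> h a' y\<bar>) | a a'. a < m \<and> a' < m}"

end

theory Submission
  imports Defs
begin


lemma simplex_le1: "s \<in> prob_simplex \<Longrightarrow> s $ y \<le> 1"
proof -
  assume s: "s \<in> prob_simplex"
  have "s $ y \<le> (\<Sum>i\<in>UNIV. s $ i)"
    using s by (intro member_le_sum) (auto simp: prob_simplex_def)
  thus ?thesis using s by (simp add: prob_simplex_def)
qed

lemma lab_cost_simplex:
  assumes s: "s \<in> prob_simplex"
  shows "lab_cost s y = 2 * (1 - s $ y)"
proof -
  have nn: "\<And>i. 0 \<le> s $ i" and one: "(\<Sum>i\<in>UNIV. s $ i) = 1" using s by (auto simp: prob_simplex_def)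
  have "lab_cost s y = (\<Sum>j\<in>UNIV. \<bar>s $ j - (if j = y then 1 else 0)\<bar>)"
    by (simp add: lab_cost_def l1norm_def lab_vec_def)
  also have "\<dots> = \<bar>s $ y - 1\<bar> + (\<Sum>j\<in>UNIV - {y}. \<bar>s $ j - (if j = y then 1 else 0)\<bar>)"
    by (subst sum.remove[of _ y]) auto
  also have "(\<Sum>j\<in>UNIV - {y}. \<bar>s $ j - (if j = y then 1 else 0)\<bar>) = (\<Sum>j\<in>UNIV - {y}. s $ j)"
    using nn by (intro sum.cong) auto
  also have "(\<Sum>j\<in>UNIV - {y}. s $ j) = 1 - s $ y"
    using one by (subst (asm) sum.remove[of _ y]) auto
  also have "\<bar>s $ y - 1\<bar> = 1 - s $ y" using simplex_le1[OF s] by simp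
  finally show ?thesis by simp
qed

lemma lab_cost_bounds:
  assumes "s \<in> prob_simplex" shows "0 \<le> lab_cost s y" "lab_cost s y \<le> 2"
  using lab_cost_simplex[OF assms, of y] simplex_le1[OF assms, of y] assms
  by (auto simp: prob_simplex_def)

lemma pmf_map_fst_sum:
  fixes \<gamma> :: "('a \<times> 'k::finite) pmf"
  shows "pmf (map_pmf fst \<gamma>) s = (\<Sum>y\<in>UNIV. pmf \<gamma> (s, y))"
proof -
  have "pmf (map_pmf fst \<gamma>) s = measure \<gamma> ({s} \<times> UNIV)"
  proof -
    have "fst -` {s} = {s} \<times> (UNIV::'k set)" by auto
    thus ?thesis by (simp add: pmf_map)
  qed
  also have "\<dots> = sum (pmf \<gamma>) ({s} \<times> UNIV)" by (simp add: measure_measure_pmf_finite)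
  also have "\<dots> = (\<Sum>y\<in>UNIV. pmf \<gamma> (s, y))"
    by (rule sum.reindex_cong[where l="\<lambda>y. (s,y)"]) (auto simp: inj_on_def)
  finally show ?thesis .
qed

lemma pmf_map_snd_sum:
  fixes \<gamma> :: "('a \<times> 'k) pmf"
  assumes "finite R" "set_pmf \<gamma> \<subseteq> R \<times> UNIV"
  shows "pmf (map_pmf snd \<gamma>) y = (\<Sum>s\<in>R. pmf \<gamma> (s, y))"
proof -
  have "pmf (map_pmf snd \<gamma>) y = measure \<gamma> (snd -` {y})" by (simp add: pmf_map)
  also have "\<dots> = measure \<gamma> (snd -` {y} \<inter> set_pmf \<gamma>)" by (simp add: measure_Int_set_pmf)
  also have "snd -` {y} \<inter> set_pmf \<gamma> = (R \<times> {y}) \<inter> set_pmf \<gamma>" using assms(2) by auto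
  also have "measure \<gamma> \<dots> = measure \<gamma> (R \<times> {y})" by (simp add: measure_Int_set_pmf)
  also have "\<dots> = sum (pmf \<gamma>) (R \<times> {y})" using assms(1) by (simp add: measure_measure_pmf_finite)
  also have "\<dots> = (\<Sum>s\<in>R. pmf \<gamma> (s, y))"
    by (rule sum.reindex_cong[where l="\<lambda>s. (s,y)"]) (auto simp: inj_on_def)
  finally show ?thesis .
qed

lemma set_pmf_fst_sub:
  assumes "map_pmf fst \<gamma> = rh" "set_pmf rh \<subseteq> R"
  shows "set_pmf \<gamma> \<subseteq> R \<times> UNIV"
proof
  fix z assume "z \<in> set_pmf \<gamma>"
  hence "fst z \<in> set_pmf (map_pmf fst \<gamma>)" by simp
  thus "z \<in> R \<times> UNIV" using assms by (cases z) auto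
qed

definition hh :: "(real^'k::finite) pmf \<Rightarrow> ((real^'k) \<times> 'k) pmf \<Rightarrow> 'k \<Rightarrow> real^'k \<Rightarrow> 'k \<Rightarrow> real" where
  "hh rh \<gamma> y0 s y = (if s \<in> set_pmf rh then pmf \<gamma> (s, y) / pmf rh s else (if y = y0 then 1 else 0))"

lemma hhat_hh: "hhat f rh \<gamma> y0 x a y = hh (rh a) (\<gamma> a) y0 (f x a) y"
  by (simp add: hhat_def hh_def)

lemma hh_nonneg: "0 \<le> hh rh \<gamma> y0 s y"
  by (simp add: hh_def)

lemma hh_sum:
  assumes "map_pmf fst \<gamma> = rh"
  shows "(\<Sum>y\<in>UNIV. hh rh \<gamma> y0 s y) = 1"
proof (cases "s \<in> set_pmf rh")
  case True
  hence p: "pmf rh s > 0" by (simp add: pmf_positive)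
  have "(\<Sum>y\<in>UNIV. hh rh \<gamma> y0 s y) = (\<Sum>y\<in>UNIV. pmf \<gamma> (s, y)) / pmf rh s"
    using True by (simp add: hh_def sum_divide_distrib)
  also have "(\<Sum>y\<in>UNIV. pmf \<gamma> (s, y)) = pmf rh s"
    using pmf_map_fst_sum[of \<gamma> s] assms by simp
  finally show ?thesis using p by simp
next
  case False thus ?thesis by (simp add: hh_def)
qed

lemma hh_mult:
  assumes "map_pmf fst \<gamma> = rh"
  shows "pmf rh s * hh rh \<gamma> y0 s y = pmf \<gamma> (s, y)"
proof (cases "s \<in> set_pmf rh")
  case True
  hence "pmf rh s > 0" by (simp add: pmf_positive)
  thus ?thesis using True by (simp add: hh_def)
next
  case False
  hence "pmf rh s = 0" by (simp add: set_pmf_iff)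
  moreover have "pmf \<gamma> (s, y) = 0"
  proof (rule ccontr)
    assume "pmf \<gamma> (s, y) \<noteq> 0"
    hence "(s, y) \<in> set_pmf \<gamma>" by (simp add: set_pmf_eq')
    hence "s \<in> set_pmf rh" using assms by force
    thus False using False by simp
  qed
  ultimately show ?thesis by simp
qed

definition cost :: "((real^'k::finite) \<times> 'k) pmf \<Rightarrow> real" where
  "cost \<gamma> = (\<Sum>z\<in>set_pmf \<gamma>. lab_cost (fst z) (snd z) * pmf \<gamma> z)"

lemma transport_obj_cost: "transport_obj m \<gamma> = (\<Sum>a<m. cost (\<gamma> a))"
  by (simp add: transport_obj_def cost_def)

lemma cost_R:
  assumes "finite R" "set_pmf \<gamma> \<subseteq> R \<times> UNIV"
  shows "cost \<gamma> = (\<Sum>s\<in>R. \<Sum>y\<in>UNIV. lab_cost s y * pmf \<gamma> (s, y))"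
proof -
  have "cost \<gamma> = (\<Sum>z\<in>R \<times> UNIV. lab_cost (fst z) (snd z) * pmf \<gamma> z)"
    unfolding cost_def using assms
    by (intro sum.mono_neutral_left) (auto simp: set_pmf_eq')
  thus ?thesis by (simp add: sum.cartesian_product case_prod_beta)
qed



lemma err_a:
  assumes R: "finite R" "R \<subseteq> prob_simplex" and rh: "set_pmf rh \<subseteq> R" and \<gamma>: "map_pmf fst \<gamma> = rh"
  shows "(\<Sum>s\<in>R. r s * (\<Sum>y\<in>UNIV. hh rh \<gamma> y0 s y * (1 - s $ y)))
          \<le> cost \<gamma> / 2 + (\<Sum>s\<in>R. \<bar>pmf rh s - r s\<bar>)"
proof -
  define H where "H s = (\<Sum>y\<in>UNIV. hh rh \<gamma> y0 s y * (1 - s $ y))" for s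
  have H0: "0 \<le> H s" if "s \<in> R" for s
    unfolding H_def using that R simplex_le1 by (intro sum_nonneg mult_nonneg_nonneg hh_nonneg) auto
  have H1: "H s \<le> 1" if "s \<in> R" for s
  proof -
    have "H s \<le> (\<Sum>y\<in>UNIV. hh rh \<gamma> y0 s y)"
      unfolding H_def using that R by (intro sum_mono mult_left_le) (auto simp: hh_nonneg prob_simplex_def)
    thus ?thesis using hh_sum[OF \<gamma>] by simp
  qed
  have sub: "set_pmf \<gamma> \<subseteq> R \<times> UNIV" using set_pmf_fst_sub[OF \<gamma> rh] .
  have "cost \<gamma> = (\<Sum>s\<in>R. \<Sum>y\<in>UNIV. lab_cost s y * pmf \<gamma> (s, y))" using cost_R[OF R(1) sub] .
  also have "\<dots> = (\<Sum>s\<in>R. \<Sum>y\<in>UNIV. 2 * (pmf rh s * (hh rh \<gamma> y0 s y * (1 - s $ y))))"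
  proof (intro sum.cong refl)
    fix s y assume "s \<in> R"
    hence "s \<in> prob_simplex" using R by auto
    thus "lab_cost s y * pmf \<gamma> (s, y) = 2 * (pmf rh s * (hh rh \<gamma> y0 s y * (1 - s $ y)))"
      using hh_mult[OF \<gamma>, of s y0 y] lab_cost_simplex[of s y]
      by (simp only:) (metis (no_types, lifting) mult.assoc mult.commute right_diff_distrib' mult.right_neutral)
  qed
  also have "\<dots> = 2 * (\<Sum>s\<in>R. pmf rh s * H s)"
    by (simp add: H_def sum_distrib_left)
  finally have c: "cost \<gamma> = 2 * (\<Sum>s\<in>R. pmf rh s * H s)" .
  have "(\<Sum>s\<in>R. r s * H s) = (\<Sum>s\<in>R. pmf rh s * H s) + (\<Sum>s\<in>R. (r s - pmf rh s) * H s)"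
    by (simp add: sum.distrib[symmetric] algebra_simps)
  also have "(\<Sum>s\<in>R. (r s - pmf rh s) * H s) \<le> (\<Sum>s\<in>R. \<bar>pmf rh s - r s\<bar>)"
  proof (rule sum_mono)
    fix s assume s: "s \<in> R"
    have "(r s - pmf rh s) * H s \<le> \<bar>r s - pmf rh s\<bar> * H s" using H0[OF s] by (intro mult_right_mono) auto
    also have "\<dots> \<le> \<bar>r s - pmf rh s\<bar> * 1" using H1[OF s] by (intro mult_left_mono) auto
    finally show "(r s - pmf rh s) * H s \<le> \<bar>pmf rh s - r s\<bar>" by simp
  qed
  finally show ?thesis using c by (simp add: H_def)
qed

lemma dp_a:
  assumes R: "finite R" and rh: "set_pmf rh \<subseteq> R" and \<gamma>: "map_pmf fst \<gamma> = rh" "map_pmf snd \<gamma> = q"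
  shows "(\<Sum>y\<in>UNIV. \<bar>(\<Sum>s\<in>R. r s * hh rh \<gamma> y0 s y) - pmf q y\<bar>) \<le> (\<Sum>s\<in>R. \<bar>pmf rh s - r s\<bar>)"
proof -
  have sub: "set_pmf \<gamma> \<subseteq> R \<times> UNIV" using set_pmf_fst_sub[OF \<gamma>(1) rh] .
  have q: "pmf q y = (\<Sum>s\<in>R. pmf rh s * hh rh \<gamma> y0 s y)" for y
    using pmf_map_snd_sum[OF R sub, of y] \<gamma> by (simp add: hh_mult[OF \<gamma>(1)])
  have "(\<Sum>y\<in>UNIV. \<bar>(\<Sum>s\<in>R. r s * hh rh \<gamma> y0 s y) - pmf q y\<bar>)
      = (\<Sum>y\<in>UNIV. \<bar>\<Sum>s\<in>R. (r s - pmf rh s) * hh rh \<gamma> y0 s y\<bar>)"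
    by (simp add: q sum_subtractf[symmetric] algebra_simps)
  also have "\<dots> \<le> (\<Sum>y\<in>UNIV. \<Sum>s\<in>R. \<bar>pmf rh s - r s\<bar> * hh rh \<gamma> y0 s y)"
    by (intro sum_mono order.trans[OF sum_abs]) (auto simp: abs_mult hh_nonneg abs_minus_commute)
  also have "\<dots> = (\<Sum>s\<in>R. \<bar>pmf rh s - r s\<bar> * (\<Sum>y\<in>UNIV. hh rh \<gamma> y0 s y))"
    by (subst sum.swap) (simp add: sum_distrib_left)
  also have "\<dots> = (\<Sum>s\<in>R. \<bar>pmf rh s - r s\<bar>)" by (simp add: hh_sum[OF \<gamma>(1)])
  finally show ?thesis .
qed



lemma construct_coupling:
  fixes g :: "(real^'k::finite) \<times> 'k \<Rightarrow> real" and q :: "'k pmf"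
  assumes R: "finite R" "R \<subseteq> prob_simplex"
    and g0: "\<And>s y. 0 \<le> g (s, y)"
    and gr: "\<And>s. s \<in> R \<Longrightarrow> (\<Sum>y\<in>UNIV. g (s, y)) = r s"
    and gq: "\<And>y. (\<Sum>s\<in>R. g (s, y)) = pmf q y"
    and rh: "set_pmf rh \<subseteq> R"
  shows "\<exists>\<gamma>. map_pmf fst \<gamma> = rh \<and> map_pmf snd \<gamma> = q \<and>
           cost \<gamma> \<le> (\<Sum>s\<in>R. \<Sum>y\<in>UNIV. lab_cost s y * g (s, y)) + (\<Sum>s\<in>R. \<bar>pmf rh s - r s\<bar>)"
proof -
  define d where "d s = pmf rh s - r s" for s
  define dp where "dp s = max (d s) 0" for s
  define dm where "dm s = max (- d s) 0" for s
  define D where "D = (\<Sum>t\<in>R. dm t)"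
  define w where "w y = (\<Sum>t\<in>R. dm t * g (t, y) / r t) / D" for y
  define G where "G z = (if fst z \<in> R then g z - dm (fst z) * g z / r (fst z) + dp (fst z) * w (snd z) else 0)" for z
  have r0: "0 \<le> r s" if "s \<in> R" for s using gr[OF that] g0 by (metis sum_nonneg)
  have sumr: "(\<Sum>s\<in>R. r s) = 1"
  proof -
    have "(\<Sum>s\<in>R. r s) = (\<Sum>s\<in>R. \<Sum>y\<in>UNIV. g (s, y))" using gr by simp
    also have "\<dots> = (\<Sum>y\<in>UNIV. pmf q y)" by (subst sum.swap) (simp add: gq)
    also have "\<dots> = 1" by (simp add: sum_pmf_eq_1)
    finally show ?thesis .
  qed
  have sumrh: "(\<Sum>s\<in>R. pmf rh s) = 1" using sum_pmf_eq_1[OF R(1) rh] .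
  have dp0: "0 \<le> dp s" and dm0: "0 \<le> dm s" for s by (auto simp: dp_def dm_def)
  have dmr: "dm s \<le> r s" if "s \<in> R" for s using r0[OF that] by (auto simp: dm_def d_def)
  have dmpos: "dm s > 0 \<Longrightarrow> r s > 0" for s
  proof -
    assume "dm s > 0"
    hence "pmf rh s < r s" by (auto simp: dm_def d_def max_def split: if_splits)
    thus ?thesis using pmf_nonneg[of rh s] by linarith
  qed
  have dpdm: "dp s - dm s = d s" for s by (auto simp: dp_def dm_def)
  have absd: "dp s + dm s = \<bar>d s\<bar>" for s by (auto simp: dp_def dm_def)
  have sumd: "(\<Sum>s\<in>R. d s) = 0" using sumr sumrh by (simp add: d_def sum_subtractf)
  have sumdp: "(\<Sum>s\<in>R. dp s) = D"
  proof -
    have "(\<Sum>s\<in>R. dp s) - D = (\<Sum>s\<in>R. d s)" by (simp add: D_def sum_subtractf[symmetric] dpdm)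
    thus ?thesis using sumd by simp
  qed
  have D0: "0 \<le> D" unfolding D_def by (intro sum_nonneg dm0)
  have w0: "0 \<le> w y" for y
    unfolding w_def using D0 by (intro divide_nonneg_nonneg sum_nonneg) (auto intro!: mult_nonneg_nonneg divide_nonneg_nonneg g0 dm0 r0)
  have dmrr: "dm t * r t / r t = dm t" for t using dmpos[of t] dm0[of t] by (cases "r t = 0") (auto simp: less_le)
  have sumw: "(\<Sum>y\<in>UNIV. w y) = (if D = 0 then 0 else 1)"
  proof -
    have "(\<Sum>y\<in>UNIV. w y) = (\<Sum>t\<in>R. dm t * (\<Sum>y\<in>UNIV. g (t, y)) / r t) / D"
      unfolding w_def by (subst sum_divide_distrib[symmetric], subst sum.swap) (simp add: sum_distrib_left sum_divide_distrib)
    also have "\<dots> = (\<Sum>t\<in>R. dm t) / D" using gr by (simp add: dmrr)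
    finally show ?thesis by (simp add: D_def)
  qed
  have Dz: "dm s = 0" "dp s = 0" if "D = 0" "s \<in> R" for s
  proof -
    show "dm s = 0" using that R(1) dm0 unfolding D_def by (meson sum_nonneg_eq_0_iff)
    show "dp s = 0" using that R(1) dp0 sumdp by (meson sum_nonneg_eq_0_iff)
  qed
  have G0: "0 \<le> G z" for z
  proof (cases "fst z \<in> R")
    case True
    obtain s y where z: "z = (s, y)" by (cases z)
    have "dm s * g z / r s \<le> g z"
    proof (cases "r s = 0")
      case False
      hence "dm s / r s \<le> 1" using dmr[of s] True z r0[of s] by auto
      hence "dm s / r s * g z \<le> 1 * g z" by (intro mult_right_mono g0[of s y, folded z])
      thus ?thesis by simp
    qed (simp add: g0[of s y, folded z])
    thus ?thesis using True z dp0[of s] w0[of y] by (simp add: G_def)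
  qed (simp add: G_def)
  have Gout: "G z = 0" if "z \<notin> R \<times> UNIV" for z using that by (cases z) (auto simp: G_def)
  have fst_marg: "(\<Sum>y\<in>UNIV. G (s, y)) = pmf rh s" if s: "s \<in> R" for s
  proof -
    have "(\<Sum>y\<in>UNIV. G (s, y)) = (\<Sum>y\<in>UNIV. g (s, y)) - dm s * (\<Sum>y\<in>UNIV. g (s, y)) / r s + dp s * (\<Sum>y\<in>UNIV. w y)"
      using s by (simp add: G_def sum.distrib sum_subtractf sum_distrib_left sum_divide_distrib)
    also have "\<dots> = r s - dm s + dp s * (\<Sum>y\<in>UNIV. w y)" using gr[OF s] by (simp add: dmrr)
    also have "dp s * (\<Sum>y\<in>UNIV. w y) = dp s" using Dz[OF _ s] by (simp add: sumw)
    finally show ?thesis using dpdm[of s] by (simp add: d_def)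
  qed
  have snd_marg: "(\<Sum>s\<in>R. G (s, y)) = pmf q y" for y
  proof -
    have "(\<Sum>s\<in>R. G (s, y)) = (\<Sum>s\<in>R. g (s, y)) - (\<Sum>s\<in>R. dm s * g (s, y) / r s) + (\<Sum>s\<in>R. dp s) * w y"
      by (simp add: G_def sum.distrib sum_subtractf sum_distrib_right)
    also have "(\<Sum>s\<in>R. dp s) * w y = (\<Sum>s\<in>R. dm s * g (s, y) / r s)"
    proof (cases "D = 0")
      case True thus ?thesis using Dz by (simp add: sumdp)
    next
      case False thus ?thesis by (simp add: sumdp w_def)
    qed
    finally show ?thesis by (simp add: gq)
  qed
  have sumG: "(\<Sum>z\<in>R \<times> UNIV. G z) = 1"
  proof -
    have "(\<Sum>z\<in>R \<times> UNIV. G z) = (\<Sum>s\<in>R. \<Sum>y\<in>UNIV. G (s, y))"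
      by (simp add: sum.cartesian_product case_prod_beta)
    also have "\<dots> = (\<Sum>s\<in>R. pmf rh s)" using fst_marg by simp
    finally show ?thesis using sumrh by simp
  qed
  have nn: "(\<integral>\<^sup>+ z. ennreal (G z) \<partial>count_space UNIV) = 1"
  proof -
    have "(\<integral>\<^sup>+ z. ennreal (G z) \<partial>count_space UNIV) = (\<Sum>z\<in>R \<times> UNIV. ennreal (G z))"
      using R(1) by (intro nn_integral_count_space') (auto simp: Gout)
    also have "\<dots> = ennreal (\<Sum>z\<in>R \<times> UNIV. G z)" using G0 by (simp add: sum_ennreal)
    finally show ?thesis by (simp add: sumG)
  qed
  define \<gamma> where "\<gamma> = embed_pmf G"
  have pg: "pmf \<gamma> z = G z" for z unfolding \<gamma>_def using G0 nn by (intro pmf_embed_pmf) auto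
  have sub: "set_pmf \<gamma> \<subseteq> R \<times> UNIV" using Gout by (auto simp: set_pmf_iff pg) blast
  have m1: "map_pmf fst \<gamma> = rh"
  proof (rule pmf_eqI)
    fix s show "pmf (map_pmf fst \<gamma>) s = pmf rh s"
    proof (cases "s \<in> R")
      case True thus ?thesis by (simp add: pmf_map_fst_sum pg fst_marg)
    next
      case False
      hence "pmf rh s = 0" using rh by (auto simp: set_pmf_iff)
      thus ?thesis using False by (simp add: pmf_map_fst_sum pg G_def)
    qed
  qed
  have m2: "map_pmf snd \<gamma> = q"
    by (rule pmf_eqI) (simp add: pmf_map_snd_sum[OF R(1) sub] pg snd_marg)
  have "cost \<gamma> = (\<Sum>s\<in>R. \<Sum>y\<in>UNIV. lab_cost s y * G (s, y))" by (simp add: cost_R[OF R(1) sub] pg)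
  also have "\<dots> \<le> (\<Sum>s\<in>R. \<Sum>y\<in>UNIV. lab_cost s y * g (s, y) + 2 * dp s * w y)"
  proof (intro sum_mono)
    fix s y assume s: "s \<in> R"
    have cb: "0 \<le> lab_cost s y" "lab_cost s y \<le> 2" using lab_cost_bounds[of s y] s R by auto
    have a: "0 \<le> dm s * g (s, y) / r s" using dm0 g0 r0[OF s] by auto
    have "lab_cost s y * G (s, y) = lab_cost s y * g (s, y) - lab_cost s y * (dm s * g (s, y) / r s) + lab_cost s y * (dp s * w y)"
      using s by (simp add: G_def algebra_simps)
    also have "\<dots> \<le> lab_cost s y * g (s, y) + 2 * (dp s * w y)"
    proof -
      have "0 \<le> lab_cost s y * (dm s * g (s, y) / r s)" using cb a by (intro mult_nonneg_nonneg)
      moreover have "lab_cost s y * (dp s * w y) \<le> 2 * (dp s * w y)"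
        using cb dp0[of s] w0[of y] by (intro mult_right_mono) auto
      ultimately show ?thesis by linarith
    qed
    finally show "lab_cost s y * G (s, y) \<le> lab_cost s y * g (s, y) + 2 * dp s * w y" by simp
  qed
  also have "\<dots> = (\<Sum>s\<in>R. \<Sum>y\<in>UNIV. lab_cost s y * g (s, y)) + 2 * (\<Sum>s\<in>R. dp s * (\<Sum>y\<in>UNIV. w y))"
    by (simp add: sum.distrib sum_distrib_left mult.assoc)
  also have "(\<Sum>s\<in>R. dp s * (\<Sum>y\<in>UNIV. w y)) \<le> (\<Sum>s\<in>R. dp s)"
    using dp0 by (intro sum_mono) (auto simp: sumw)
  also have "2 * (\<Sum>s\<in>R. dp s) = (\<Sum>s\<in>R. \<bar>pmf rh s - r s\<bar>)"
  proof -
    have "2 * (\<Sum>s\<in>R. dp s) = (\<Sum>s\<in>R. dp s) + (\<Sum>s\<in>R. dm s)" using sumdp by (simp add: D_def)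
    also have "\<dots> = (\<Sum>s\<in>R. \<bar>d s\<bar>)" by (simp add: sum.distrib[symmetric] absd)
    finally show ?thesis by (simp add: d_def)
  qed
  finally show ?thesis using m1 m2 by auto
qed



locale fsetup =
  fixes \<mu> :: "('x::polish_space \<times> 'k::finite \<times> nat) measure" and m :: nat and f :: "'x \<Rightarrow> nat \<Rightarrow> real^'k"
  assumes cp: "classif_problem \<mu> m"
    and fm: "\<forall>a<m. (\<lambda>x. f x a) \<in> borel_measurable borel"
    and fs: "\<forall>x. \<forall>a<m. f x a \<in> prob_simplex"
    and cal: "calibrated \<mu> f m"
    and fin: "\<forall>a<m. finite (msupport (pushf \<mu> f a))"
begin

abbreviation "S0 \<equiv> (borel \<Otimes>\<^sub>M (count_space UNIV \<Otimes>\<^sub>M count_space {..<m}) :: ('x \<times> 'k \<times> nat) measure)"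

lemma sets_mu: "sets \<mu> = sets S0"
  using cp by (simp add: classif_problem_def)

lemma space_mu: "space \<mu> = space S0"
  using sets_mu by (rule sets_eq_imp_space_eq)

lemma prob_mu: "prob_space \<mu>" using cp by (simp add: classif_problem_def)

lemma Aev_pos: "a < m \<Longrightarrow> measure \<mu> (Aev \<mu> a) > 0" using cp by (simp add: classif_problem_def)

lemma Aev_sets: "Aev \<mu> a \<in> sets \<mu>"
proof -
  have "{z \<in> space S0. snd (snd z) = a} \<in> sets S0"
    by measurable
  thus ?thesis using sets_mu space_mu by (simp add: Aev_def)
qed

lemma meas_mu_cong: "measurable \<mu> N = measurable S0 N"
  using sets_mu by (intro measurable_cong_sets) auto

lemma phi_meas_mu: "a < m \<Longrightarrow> (\<lambda>z. f (fst z) a) \<in> borel_measurable \<mu>"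
  unfolding meas_mu_cong using fm by (auto intro!: measurable_compose[OF measurable_fst])

lemma Y_meas_mu: "(\<lambda>z. fst (snd z)) \<in> measurable \<mu> (count_space UNIV)"
  unfolding meas_mu_cong by measurable

lemma sets_condA: "sets (condA \<mu> a) = sets \<mu>" by (simp add: condA_def)
lemma space_condA: "space (condA \<mu> a) = space \<mu>" by (simp add: condA_def)

lemma meas_condA_cong: "measurable (condA \<mu> a) N = measurable \<mu> N"
  by (intro measurable_cong_sets) (auto simp: sets_condA)

lemma prob_condA: "a < m \<Longrightarrow> prob_space (condA \<mu> a)"
proof -
  assume a: "a < m"
  interpret prob_space \<mu> by (rule prob_mu)
  show ?thesis unfolding condA_def
    using Aev_pos[OF a] Aev_sets by (intro prob_space_uniform_measure) (auto simp: emeasure_eq_measure)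
qed

lemma measure_condA: "a < m \<Longrightarrow> A \<in> sets \<mu> \<Longrightarrow> measure (condA \<mu> a) A = measure \<mu> (A \<inter> Aev \<mu> a) / measure \<mu> (Aev \<mu> a)"
proof -
  assume a: "a < m" and A: "A \<in> sets \<mu>"
  interpret prob_space \<mu> by (rule prob_mu)
  show ?thesis unfolding condA_def using Aev_sets A Aev_pos[OF a]
    by (subst measure_uniform_measure) (auto simp: emeasure_eq_measure Int_commute)
qed

lemma prob_P: "a < m \<Longrightarrow> prob_space (pushf \<mu> f a)"
  unfolding pushf_def using prob_condA phi_meas_mu
  by (intro prob_space.prob_space_distr) (auto simp: meas_condA_cong)

lemma sets_P [simp]: "sets (pushf \<mu> f a) = sets borel" by (simp add: pushf_def)
lemma space_P [simp]: "space (pushf \<mu> f a) = UNIV" by (simp add: pushf_def)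

lemma measure_P: "a < m \<Longrightarrow> B \<in> sets borel \<Longrightarrow>
   measure (pushf \<mu> f a) B = measure (condA \<mu> a) ((\<lambda>z. f (fst z) a) -` B \<inter> space \<mu>)"
  unfolding pushf_def using phi_meas_mu
  by (subst measure_distr) (auto simp: space_condA meas_condA_cong)

lemma emeasure_P: "a < m \<Longrightarrow> B \<in> sets borel \<Longrightarrow>
   emeasure (pushf \<mu> f a) B = emeasure (condA \<mu> a) ((\<lambda>z. f (fst z) a) -` B \<inter> space \<mu>)"
  unfolding pushf_def using phi_meas_mu
  by (subst emeasure_distr) (auto simp: space_condA meas_condA_cong)

definition "RR a = msupport (pushf \<mu> f a)"
definition "rr a s = measure (pushf \<mu> f a) {s}"

lemma RR_fin: "a < m \<Longrightarrow> finite (RR a)" using fin by (simp add: RR_def)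

lemma RR_closed: "a < m \<Longrightarrow> closed (RR a)" using RR_fin by (simp add: finite_imp_closed)

lemma null_compl: "a < m \<Longrightarrow> emeasure (pushf \<mu> f a) (- RR a) = 0"
proof -
  assume a: "a < m"
  define F where "F = {U :: (real^'k) set. open U \<and> emeasure (pushf \<mu> f a) U = 0}"
  have cov: "- RR a \<subseteq> \<Union>F"
  proof
    fix s assume "s \<in> - RR a"
    then obtain U where "open U" "s \<in> U" "\<not> emeasure (pushf \<mu> f a) U > 0"
      by (auto simp: RR_def msupport_def)
    thus "s \<in> \<Union>F" by (auto simp: F_def)
  qed
  obtain F' where F': "F' \<subseteq> F" "countable F'" "\<Union>F' = \<Union>F"
    using Lindelof[of F] by (auto simp: F_def)
  have "(\<Union>U\<in>F'. U) \<in> null_sets (pushf \<mu> f a)"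
    using F' by (intro null_sets_UN') (auto simp: F_def null_sets_def)
  hence "\<Union>F \<in> null_sets (pushf \<mu> f a)" using F' by simp
  moreover have "- RR a \<in> sets (pushf \<mu> f a)" using RR_closed[OF a] by auto
  ultimately have "- RR a \<in> null_sets (pushf \<mu> f a)" using cov by (rule null_sets_subset)
  thus ?thesis by auto
qed

lemma meas_RR: "a < m \<Longrightarrow> measure (pushf \<mu> f a) (RR a) = 1"
proof -
  assume a: "a < m"
  interpret P: prob_space "pushf \<mu> f a" using prob_P[OF a] .
  have "measure (pushf \<mu> f a) (- RR a) = 0" using null_compl[OF a] by (simp add: measure_def)
  moreover have "measure (pushf \<mu> f a) (- RR a) = 1 - measure (pushf \<mu> f a) (RR a)"
    using RR_closed[OF a] P.prob_compl[of "RR a"] by (auto simp: Compl_eq_Diff_UNIV)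
  ultimately show ?thesis by simp
qed

lemma sum_rr: "a < m \<Longrightarrow> (\<Sum>s\<in>RR a. rr a s) = 1"
proof -
  assume a: "a < m"
  interpret P: prob_space "pushf \<mu> f a" using prob_P[OF a] .
  have "measure (pushf \<mu> f a) (RR a) = (\<Sum>s\<in>RR a. rr a s)"
    unfolding rr_def using RR_fin[OF a] by (intro measure_eq_sum_singleton) auto
  thus ?thesis using meas_RR[OF a] by simp
qed

lemma rr_nonneg: "0 \<le> rr a s" by (simp add: rr_def)

lemma RR_simplex: "a < m \<Longrightarrow> RR a \<subseteq> prob_simplex"
proof
  fix s assume a: "a < m" and s: "s \<in> RR a"
  show "s \<in> prob_simplex"
  proof (rule ccontr)
    assume ns: "s \<notin> prob_simplex"
    have cl: "closed (prob_simplex :: (real^'k) set)"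
    proof -
      have "prob_simplex = (\<Inter>i. {x::real^'k. 0 \<le> x $ i}) \<inter> {x. (\<Sum>i\<in>UNIV. x $ i) = 1}"
        by (auto simp: prob_simplex_def)
      moreover have "closed {x::real^'k. (\<Sum>i\<in>UNIV. x $ i) = 1}"
        by (intro closed_Collect_eq continuous_intros)
      moreover have "closed {x::real^'k. 0 \<le> x $ i}" for i
        by (intro closed_Collect_le continuous_intros)
      ultimately show ?thesis by (metis (no_types, lifting) closed_INT closed_Int)
    qed
    have "emeasure (pushf \<mu> f a) (- prob_simplex) > 0"
      using s ns cl by (auto simp: RR_def msupport_def)
    moreover have "emeasure (pushf \<mu> f a) (- prob_simplex) = 0"
    proof -
      have "(\<lambda>z. f (fst z) a) -` (- prob_simplex) \<inter> space \<mu> = {}" using fs a by auto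
      thus ?thesis using cl a by (subst emeasure_P) auto
    qed
    ultimately show False by simp
  qed
qed

lemma AE_RR: "a < m \<Longrightarrow> AE z in condA \<mu> a. f (fst z) a \<in> RR a"
proof -
  assume a: "a < m"
  have "emeasure (condA \<mu> a) ((\<lambda>z. f (fst z) a) -` (- RR a) \<inter> space \<mu>) = 0"
    using emeasure_P[OF a, of "- RR a"] null_compl[OF a] RR_closed[OF a] by auto
  moreover have "(\<lambda>z. f (fst z) a) -` (- RR a) \<inter> space \<mu> \<in> sets (condA \<mu> a)"
    using phi_meas_mu[OF a] RR_closed[OF a] by (auto simp: sets_condA)
  ultimately show ?thesis
    by (intro AE_I[where N="(\<lambda>z. f (fst z) a) -` (- RR a) \<inter> space \<mu>"]) (auto simp: space_condA)
qed

end


lemma integral_finite_vals: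
  fixes \<phi> :: "'a \<Rightarrow> real^'n::finite" and Y :: "'a \<Rightarrow> 'k::finite" and G :: "real^'n \<Rightarrow> 'k \<Rightarrow> real"
  assumes M: "prob_space M" and R: "finite R"
    and \<phi>: "\<phi> \<in> borel_measurable M" and Y: "Y \<in> measurable M (count_space UNIV)"
    and AE: "AE z in M. \<phi> z \<in> R"
    and hG: "\<And>y. (\<lambda>s. G s y) \<in> borel_measurable borel"
  shows "(\<integral>z. G (\<phi> z) (Y z) \<partial>M) = (\<Sum>s\<in>R. \<Sum>y\<in>UNIV. G s y * measure M {z\<in>space M. \<phi> z = s \<and> Y z = y})"
proof -
  interpret prob_space M by (rule M)
  have setsA: "{z\<in>space M. \<phi> z = s \<and> Y z = y} \<in> sets M" for s y
  proof -
    have "{z\<in>space M. \<phi> z = s \<and> Y z = y} = (\<phi> -` {s} \<inter> space M) \<inter> (Y -` {y} \<inter> space M)" by auto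
    moreover have "\<phi> -` {s} \<inter> space M \<in> sets M" using \<phi> by (intro measurable_sets) auto
    moreover have "Y -` {y} \<inter> space M \<in> sets M" using Y by (intro measurable_sets) auto
    ultimately show ?thesis by auto
  qed
  have m1: "(\<lambda>z. G (\<phi> z) (Y z)) \<in> borel_measurable M"
  proof (rule measurable_compose_countable'[where I=UNIV and g=Y and f="\<lambda>y z. G (\<phi> z) y"])
    fix y show "(\<lambda>z. G (\<phi> z) y) \<in> borel_measurable M" using measurable_compose[OF \<phi> hG[of y]] by simp
  qed (use Y in auto)
  have m2: "(\<lambda>z. \<Sum>s\<in>R. \<Sum>y\<in>UNIV. G s y * indicator {z\<in>space M. \<phi> z = s \<and> Y z = y} z) \<in> borel_measurable M"
    using setsA by (intro borel_measurable_sum borel_measurable_times borel_measurable_const borel_measurable_indicator) auto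
  have "(\<integral>z. G (\<phi> z) (Y z) \<partial>M) = (\<integral>z. (\<Sum>s\<in>R. \<Sum>y\<in>UNIV. G s y * indicator {z\<in>space M. \<phi> z = s \<and> Y z = y} z) \<partial>M)"
  proof (rule integral_cong_AE[OF m1 m2])
    show "AE z in M. G (\<phi> z) (Y z) = (\<Sum>s\<in>R. \<Sum>y\<in>UNIV. G s y * indicator {z\<in>space M. \<phi> z = s \<and> Y z = y} z)"
      using AE AE_space
    proof (eventually_elim)
      case (elim z)
      have "(\<Sum>s\<in>R. \<Sum>y\<in>UNIV. G s y * indicator {z\<in>space M. \<phi> z = s \<and> Y z = y} z)
          = (\<Sum>s\<in>R. \<Sum>y\<in>UNIV. (if s = \<phi> z then (if y = Y z then G s y else 0) else 0))"
        using elim by (intro sum.cong refl) (auto simp: indicator_def)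
      also have "\<dots> = (\<Sum>s\<in>R. (if s = \<phi> z then G s (Y z) else 0))"
        by (intro sum.cong refl) (simp add: sum.delta')
      also have "\<dots> = G (\<phi> z) (Y z)" using elim R by (simp add: sum.delta')
      finally show ?case by simp
    qed
  qed
  also have "\<dots> = (\<Sum>s\<in>R. \<Sum>y\<in>UNIV. G s y * measure M {z\<in>space M. \<phi> z = s \<and> Y z = y})"
  proof -
    have int: "integrable M (\<lambda>z. G s y * indicator {z\<in>space M. \<phi> z = s \<and> Y z = y} z)" for s y
      using setsA by (intro integrable_mult_right) (simp add: integrable_indicator_iff emeasure_eq_measure)
    have "(\<integral>z. (\<Sum>s\<in>R. \<Sum>y\<in>UNIV. G s y * indicator {z\<in>space M. \<phi> z = s \<and> Y z = y} z) \<partial>M)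
        = (\<Sum>s\<in>R. \<Sum>y\<in>UNIV. (\<integral>z. G s y * indicator {z\<in>space M. \<phi> z = s \<and> Y z = y} z \<partial>M))"
    proof -
      have i2: "integrable M (\<lambda>z. \<Sum>y\<in>UNIV. G s y * indicator {z\<in>space M. \<phi> z = s \<and> Y z = y} z)" for s
        by (rule Bochner_Integration.integrable_sum) (rule int)
      show ?thesis
        apply (subst Bochner_Integration.integral_sum[OF i2])
        apply (intro sum.cong refl)
        apply (subst Bochner_Integration.integral_sum[OF int])
        apply simp
        done
    qed
    also have "\<dots> = (\<Sum>s\<in>R. \<Sum>y\<in>UNIV. G s y * measure M {z\<in>space M. \<phi> z = s \<and> Y z = y})"
      by (intro sum.cong refl) (simp add: Int_absorb2)
    finally show ?thesis .
  qed
  finally show ?thesis .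
qed



lemma hh_meas:
  assumes "finite (set_pmf rh)"
  shows "(\<lambda>s. hh rh \<gamma> y0 s y) \<in> borel_measurable borel"
proof -
  have eq: "hh rh \<gamma> y0 s y = (\<Sum>t\<in>set_pmf rh. indicator {t} s * (pmf \<gamma> (t, y) / pmf rh t))
      + indicator (- set_pmf rh) s * (if y = y0 then 1 else 0)" for s
  proof (cases "s \<in> set_pmf rh")
    case True
    have "(\<Sum>t\<in>set_pmf rh. indicator {t} s * (pmf \<gamma> (t, y) / pmf rh t)) = (\<Sum>t\<in>set_pmf rh. if t = s then pmf \<gamma> (s, y) / pmf rh s else 0)"
      by (intro sum.cong) (auto simp: indicator_def)
    thus ?thesis using True assms by (simp add: hh_def sum.delta')
  next
    case False
    have "(\<Sum>t\<in>set_pmf rh. indicator {t} s * (pmf \<gamma> (t, y) / pmf rh t)) = 0"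
      using False by (intro sum.neutral) (auto simp: indicator_def)
    thus ?thesis using False by (simp add: hh_def)
  qed
  have "- set_pmf rh \<in> sets borel" using assms by (intro borel_open) (simp add: finite_imp_closed open_Compl)
  thus ?thesis unfolding eq
    by (intro borel_measurable_add borel_measurable_sum borel_measurable_times borel_measurable_indicator borel_measurable_const) auto
qed

context fsetup begin

lemma cal_cell:
  assumes a: "a < m"
  shows "measure (condA \<mu> a) {z\<in>space (condA \<mu> a). f (fst z) a = s \<and> fst (snd z) = y} = s $ y * rr a s"
proof -
  interpret prob_space \<mu> by (rule prob_mu)
  let ?A = "Aev \<mu> a"
  have setA: "{z\<in>space \<mu>. f (fst z) a = s \<and> fst (snd z) = y} \<in> sets \<mu>"
  proof -
    have "{z\<in>space \<mu>. f (fst z) a = s \<and> fst (snd z) = y} = ((\<lambda>z. f (fst z) a) -` {s} \<inter> space \<mu>) \<inter> ((\<lambda>z. fst (snd z)) -` {y} \<inter> space \<mu>)" by auto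
    thus ?thesis using phi_meas_mu[OF a] Y_meas_mu by (auto intro!: measurable_sets)
  qed
  have setB: "{z \<in> ?A. f (fst z) a \<in> {s}} \<in> sets \<mu>"
  proof -
    have "{z \<in> ?A. f (fst z) a \<in> {s}} = ((\<lambda>z. f (fst z) a) -` {s} \<inter> space \<mu>) \<inter> ?A" by (auto simp: Aev_def)
    thus ?thesis using phi_meas_mu[OF a] Aev_sets by (auto intro!: measurable_sets)
  qed
  have c: "measure \<mu> {z \<in> ?A. fst (snd z) = y \<and> f (fst z) a \<in> {s}}
     = (\<integral>z. indicator {z \<in> ?A. f (fst z) a \<in> {s}} z * (f (fst z) a $ y) \<partial>\<mu>)"
  proof -
    have "{s} \<in> sets (borel :: (real^'k) measure)" by simp
    thus ?thesis using cal a unfolding calibrated_def by blast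
  qed
  also have "\<dots> = (\<integral>z. indicator {z \<in> ?A. f (fst z) a \<in> {s}} z * (s $ y) \<partial>\<mu>)"
    by (intro Bochner_Integration.integral_cong refl) (auto simp: indicator_def)
  also have "\<dots> = s $ y * measure \<mu> {z \<in> ?A. f (fst z) a \<in> {s}}"
    using setB sets.sets_into_space[OF setB] by (simp add: Int_absorb2)
  finally have c: "measure \<mu> {z \<in> ?A. fst (snd z) = y \<and> f (fst z) a \<in> {s}} = s $ y * measure \<mu> {z \<in> ?A. f (fst z) a \<in> {s}}" .
  have "measure (condA \<mu> a) {z\<in>space (condA \<mu> a). f (fst z) a = s \<and> fst (snd z) = y}
      = measure \<mu> ({z\<in>space \<mu>. f (fst z) a = s \<and> fst (snd z) = y} \<inter> ?A) / measure \<mu> ?A"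
    using measure_condA[OF a setA] by (simp add: space_condA)
  also have "{z\<in>space \<mu>. f (fst z) a = s \<and> fst (snd z) = y} \<inter> ?A = {z \<in> ?A. fst (snd z) = y \<and> f (fst z) a \<in> {s}}"
    by (auto simp: Aev_def)
  also have "rr a s = measure \<mu> ({z \<in> ?A. f (fst z) a \<in> {s}}) / measure \<mu> ?A"
  proof -
    have "rr a s = measure (condA \<mu> a) ((\<lambda>z. f (fst z) a) -` {s} \<inter> space \<mu>)"
      unfolding rr_def using measure_P[OF a, of "{s}"] by simp
    also have "\<dots> = measure \<mu> (((\<lambda>z. f (fst z) a) -` {s} \<inter> space \<mu>) \<inter> ?A) / measure \<mu> ?A"
      using phi_meas_mu[OF a] by (intro measure_condA[OF a]) (auto intro!: measurable_sets)
    also have "((\<lambda>z. f (fst z) a) -` {s} \<inter> space \<mu>) \<inter> ?A = {z \<in> ?A. f (fst z) a \<in> {s}}"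
      by (auto simp: Aev_def)
    finally show ?thesis .
  qed
  ultimately show ?thesis using c by simp
qed

lemma randErr_formula:
  assumes a: "a < m" and fin_rh: "finite (set_pmf (rh a))" and \<gamma>: "map_pmf fst (\<gamma> a) = rh a"
  shows "randErr \<mu> (hhat f rh \<gamma> y0) a = (\<Sum>s\<in>RR a. rr a s * (\<Sum>y\<in>UNIV. hh (rh a) (\<gamma> a) y0 s y * (1 - s $ y)))"
proof -
  let ?h = "hh (rh a) (\<gamma> a) y0"
  define G where "G s y' = (\<Sum>y\<in>UNIV - {y'}. ?h s y)" for s y'
  have G1: "G s y' = 1 - ?h s y'" for s y'
    using hh_sum[OF \<gamma>, of y0 s] by (simp add: G_def sum_diff1)
  have "randErr \<mu> (hhat f rh \<gamma> y0) a = (\<integral>z. G (f (fst z) a) (fst (snd z)) \<partial>condA \<mu> a)"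
    by (simp add: randErr_def G_def hhat_hh)
  also have "\<dots> = (\<Sum>s\<in>RR a. \<Sum>y\<in>UNIV. G s y * measure (condA \<mu> a) {z\<in>space (condA \<mu> a). f (fst z) a = s \<and> fst (snd z) = y})"
    by (intro integral_finite_vals prob_condA a RR_fin AE_RR)
       (auto simp: meas_condA_cong phi_meas_mu[OF a] Y_meas_mu G1 intro!: hh_meas fin_rh borel_measurable_diff)
  also have "\<dots> = (\<Sum>s\<in>RR a. rr a s * (\<Sum>y\<in>UNIV. (1 - ?h s y) * s $ y))"
    by (intro sum.cong refl) (auto simp: cal_cell[OF a] G1 sum_distrib_left algebra_simps)
  also have "\<dots> = (\<Sum>s\<in>RR a. rr a s * (\<Sum>y\<in>UNIV. ?h s y * (1 - s $ y)))"
  proof (intro sum.cong refl)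
    fix s assume s: "s \<in> RR a"
    hence ss: "(\<Sum>y\<in>UNIV. s $ y) = 1" using RR_simplex[OF a] by (auto simp: prob_simplex_def)
    have "(\<Sum>y\<in>UNIV. (1 - ?h s y) * s $ y) = 1 - (\<Sum>y\<in>UNIV. ?h s y * s $ y)"
      using ss by (simp add: algebra_simps sum_subtractf)
    also have "\<dots> = (\<Sum>y\<in>UNIV. ?h s y * (1 - s $ y))"
      using hh_sum[OF \<gamma>, of y0 s] by (simp add: algebra_simps sum_subtractf)
    finally show "rr a s * (\<Sum>y\<in>UNIV. (1 - ?h s y) * s $ y) = rr a s * (\<Sum>y\<in>UNIV. ?h s y * (1 - s $ y))" by simp
  qed
  finally show ?thesis .
qed

lemma predProb_formula:
  assumes a: "a < m" and fin_rh: "finite (set_pmf (rh a))"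
  shows "predProb \<mu> (hhat f rh \<gamma> y0) a y = (\<Sum>s\<in>RR a. rr a s * hh (rh a) (\<gamma> a) y0 s y)"
proof -
  let ?h = "hh (rh a) (\<gamma> a) y0"
  have "predProb \<mu> (hhat f rh \<gamma> y0) a y = (\<integral>z. (\<lambda>s y'. ?h s y) (f (fst z) a) (fst (snd z)) \<partial>condA \<mu> a)"
    by (simp add: predProb_def hhat_hh)
  also have "\<dots> = (\<Sum>s\<in>RR a. \<Sum>y'\<in>UNIV. ?h s y * measure (condA \<mu> a) {z\<in>space (condA \<mu> a). f (fst z) a = s \<and> fst (snd z) = y'})"
    by (intro integral_finite_vals prob_condA a RR_fin AE_RR)
       (auto simp: meas_condA_cong phi_meas_mu[OF a] Y_meas_mu intro!: hh_meas fin_rh)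
  also have "\<dots> = (\<Sum>s\<in>RR a. rr a s * ?h s y * (\<Sum>y'\<in>UNIV. s $ y'))"
    by (intro sum.cong refl) (auto simp: cal_cell[OF a] sum_distrib_left sum_distrib_right algebra_simps)
  also have "\<dots> = (\<Sum>s\<in>RR a. rr a s * ?h s y)"
    using RR_simplex[OF a] by (intro sum.cong refl) (auto simp: prob_simplex_def)
  finally show ?thesis .
qed

end


context fsetup begin

lemma coupling_basic:
  assumes a: "a < m" and \<gamma>: "\<gamma> \<in> couplings (pushf \<mu> f a) q"
  shows "sets \<gamma> = sets (borel \<Otimes>\<^sub>M count_space UNIV)"
    and "space \<gamma> = UNIV"
    and "\<And>B. B \<in> sets borel \<Longrightarrow> emeasure \<gamma> (B \<times> UNIV) = emeasure (pushf \<mu> f a) B"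
    and "\<And>C. emeasure \<gamma> (UNIV \<times> C) = emeasure (measure_pmf q) C"
    and "prob_space \<gamma>"
proof -
  have s: "sets \<gamma> = sets (borel \<Otimes>\<^sub>M count_space UNIV)" using \<gamma> by (simp add: couplings_def)
  thus "sets \<gamma> = sets (borel \<Otimes>\<^sub>M count_space UNIV)" .
  have sp: "space \<gamma> = UNIV" using sets_eq_imp_space_eq[OF s] by (simp add: space_pair_measure)
  thus "space \<gamma> = UNIV" .
  have mf: "fst \<in> measurable \<gamma> borel" using s by (simp add: measurable_cong_sets[OF s refl])
  have ms: "snd \<in> measurable \<gamma> (count_space UNIV)" using s by (simp add: measurable_cong_sets[OF s refl])
  have d1: "distr \<gamma> borel fst = pushf \<mu> f a" and d2: "distr \<gamma> (count_space UNIV) snd = measure_pmf q"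
    using \<gamma> by (auto simp: couplings_def)
  show e1: "emeasure \<gamma> (B \<times> UNIV) = emeasure (pushf \<mu> f a) B" if B: "B \<in> sets borel" for B
  proof -
    have "emeasure (pushf \<mu> f a) B = emeasure \<gamma> (fst -` B \<inter> space \<gamma>)"
      using B mf by (simp add: d1[symmetric] emeasure_distr)
    also have "fst -` B \<inter> space \<gamma> = B \<times> UNIV" using sp by auto
    finally show ?thesis by simp
  qed
  show "emeasure \<gamma> (UNIV \<times> C) = emeasure (measure_pmf q) C" for C
  proof -
    have "emeasure (measure_pmf q) C = emeasure \<gamma> (snd -` C \<inter> space \<gamma>)"
      using ms by (simp add: d2[symmetric] emeasure_distr)
    also have "snd -` C \<inter> space \<gamma> = UNIV \<times> C" using sp by auto
    finally show ?thesis by simp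
  qed
  show "prob_space \<gamma>"
  proof
    have "emeasure \<gamma> (UNIV \<times> UNIV) = emeasure (pushf \<mu> f a) UNIV" using e1[of UNIV] by simp
    also have "\<dots> = 1" using prob_space.emeasure_space_1[OF prob_P[OF a]] by simp
    finally show "emeasure \<gamma> (space \<gamma>) = 1" using sp by simp
  qed
qed

lemma coupling_facts:
  assumes a: "a < m" and \<gamma>: "\<gamma> \<in> couplings (pushf \<mu> f a) q"
  shows "\<And>s. (\<Sum>y\<in>UNIV. measure \<gamma> {(s, y)}) = rr a s"
    and "\<And>y. (\<Sum>s\<in>RR a. measure \<gamma> {(s, y)}) = pmf q y"
    and "(\<integral>\<^sup>+ z. ennreal (lab_cost (fst z) (snd z)) \<partial>\<gamma>) = ennreal (\<Sum>s\<in>RR a. \<Sum>y\<in>UNIV. lab_cost s y * measure \<gamma> {(s, y)})"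
proof -
  note cb = coupling_basic[OF a \<gamma>]
  interpret G: prob_space \<gamma> by (rule cb(5))
  have sing: "{z} \<in> sets \<gamma>" for z
  proof -
    obtain s y where z: "z = (s, y)" by (cases z)
    have "{s} \<times> {y} \<in> sets (borel \<Otimes>\<^sub>M count_space (UNIV::'k set))" by (intro pair_measureI) auto
    thus ?thesis using cb(1) z by simp
  qed
  show "(\<Sum>y\<in>UNIV. measure \<gamma> {(s, y)}) = rr a s" for s
  proof -
    have "measure \<gamma> ({s} \<times> UNIV) = (\<Sum>z\<in>{s} \<times> UNIV. measure \<gamma> {z})"
      by (intro measure_eq_sum_singleton sing) (auto simp: G.emeasure_eq_measure)
    also have "\<dots> = (\<Sum>y\<in>UNIV. measure \<gamma> {(s, y)})"
      by (rule sum.reindex_cong[where l="\<lambda>y. (s,y)"]) (auto simp: inj_on_def)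
    finally have "(\<Sum>y\<in>UNIV. measure \<gamma> {(s, y)}) = measure \<gamma> ({s} \<times> UNIV)" by simp
    also have "\<dots> = rr a s" using cb(3)[of "{s}"] by (simp add: rr_def measure_def)
    finally show ?thesis .
  qed
  have nullR: "emeasure \<gamma> ((- RR a) \<times> UNIV) = 0"
    using cb(3)[of "- RR a"] null_compl[OF a] RR_closed[OF a] by auto
  show "(\<Sum>s\<in>RR a. measure \<gamma> {(s, y)}) = pmf q y" for y
  proof -
    have sR: "RR a \<times> {y} \<in> sets \<gamma>" "(- RR a) \<times> {y} \<in> sets \<gamma>" using cb(1) RR_closed[OF a] by auto
    have "measure \<gamma> (UNIV \<times> {y}) = measure \<gamma> (RR a \<times> {y} \<union> (- RR a) \<times> {y})"
      by (intro arg_cong[where f="measure \<gamma>"]) auto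
    also have "\<dots> = measure \<gamma> (RR a \<times> {y}) + measure \<gamma> ((- RR a) \<times> {y})"
      using sR by (intro G.finite_measure_Union) auto
    also have "measure \<gamma> ((- RR a) \<times> {y}) = 0"
    proof -
      have "emeasure \<gamma> ((- RR a) \<times> {y}) \<le> emeasure \<gamma> ((- RR a) \<times> UNIV)"
        using cb(1) RR_closed[OF a] by (intro emeasure_mono) auto
      thus ?thesis using nullR by (simp add: measure_def)
    qed
    also have "measure \<gamma> (RR a \<times> {y}) = (\<Sum>z\<in>RR a \<times> {y}. measure \<gamma> {z})"
      using RR_fin[OF a] by (intro measure_eq_sum_singleton sing) (auto simp: G.emeasure_eq_measure)
    also have "\<dots> = (\<Sum>s\<in>RR a. measure \<gamma> {(s, y)})"
      by (rule sum.reindex_cong[where l="\<lambda>s. (s,y)"]) (auto simp: inj_on_def)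
    finally have "(\<Sum>s\<in>RR a. measure \<gamma> {(s, y)}) = measure \<gamma> (UNIV \<times> {y})" by simp
    also have "\<dots> = pmf q y" using cb(4)[of "{y}"] by (simp add: measure_def pmf.rep_eq)
    finally show ?thesis .
  qed
  show "(\<integral>\<^sup>+ z. ennreal (lab_cost (fst z) (snd z)) \<partial>\<gamma>) = ennreal (\<Sum>s\<in>RR a. \<Sum>y\<in>UNIV. lab_cost s y * measure \<gamma> {(s, y)})"
  proof -
    have cpos: "\<And>s y. s \<in> RR a \<Longrightarrow> 0 \<le> lab_cost s y" using RR_simplex[OF a] lab_cost_bounds by blast
    have "(\<integral>\<^sup>+ z. ennreal (lab_cost (fst z) (snd z)) \<partial>\<gamma>) = (\<integral>\<^sup>+ z. (\<Sum>w\<in>RR a \<times> UNIV. ennreal (lab_cost (fst w) (snd w)) * indicator {w} z) \<partial>\<gamma>)"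
    proof (rule nn_integral_cong_AE)
      have "AE z in \<gamma>. z \<notin> (- RR a) \<times> UNIV"
        using nullR cb(1) RR_closed[OF a] by (intro AE_I'[where N="(- RR a) \<times> UNIV"]) auto
      thus "AE z in \<gamma>. ennreal (lab_cost (fst z) (snd z)) = (\<Sum>w\<in>RR a \<times> UNIV. ennreal (lab_cost (fst w) (snd w)) * indicator {w} z)"
      proof eventually_elim
        case (elim z)
        hence "z \<in> RR a \<times> UNIV" by (cases z) auto
        thus ?case using RR_fin[OF a] by (simp add: indicator_def sum.delta if_distrib cong: if_cong)
      qed
    qed
    also have "\<dots> = (\<Sum>w\<in>RR a \<times> UNIV. ennreal (lab_cost (fst w) (snd w)) * emeasure \<gamma> {w})"
      using sing by (subst nn_integral_sum) (auto intro!: sum.cong nn_integral_cmult_indicator)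
    also have "\<dots> = (\<Sum>w\<in>RR a \<times> UNIV. ennreal (lab_cost (fst w) (snd w) * measure \<gamma> {w}))"
      using cpos by (intro sum.cong refl) (auto simp: G.emeasure_eq_measure ennreal_mult)
    also have "\<dots> = ennreal (\<Sum>w\<in>RR a \<times> UNIV. lab_cost (fst w) (snd w) * measure \<gamma> {w})"
      using cpos by (intro sum_ennreal) (auto intro!: mult_nonneg_nonneg)
    also have "(\<Sum>w\<in>RR a \<times> UNIV. lab_cost (fst w) (snd w) * measure \<gamma> {w}) = (\<Sum>s\<in>RR a. \<Sum>y\<in>UNIV. lab_cost s y * measure \<gamma> {(s, y)})"
      by (simp add: sum.cartesian_product case_prod_beta)
    finally show ?thesis .
  qed
qed

end


context fsetup begin

lemma couplings_nonempty:
  assumes a: "a < m"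
  shows "pushf \<mu> f a \<Otimes>\<^sub>M measure_pmf q \<in> couplings (pushf \<mu> f a) q"
proof -
  interpret P: prob_space "pushf \<mu> f a" by (rule prob_P[OF a])
  interpret Q: prob_space "measure_pmf q" by (rule prob_space_measure_pmf)
  have s: "sets (pushf \<mu> f a \<Otimes>\<^sub>M measure_pmf q) = sets (borel \<Otimes>\<^sub>M count_space UNIV)"
    by (intro sets_pair_measure_cong) auto
  have "distr (pushf \<mu> f a \<Otimes>\<^sub>M measure_pmf q) borel fst = distr (pushf \<mu> f a \<Otimes>\<^sub>M measure_pmf q) (pushf \<mu> f a) fst"
    by (intro distr_cong) auto
  also have "\<dots> = pushf \<mu> f a" by (rule prob_space.distr_pair_fst[OF prob_space_measure_pmf])
  finally have d1: "distr (pushf \<mu> f a \<Otimes>\<^sub>M measure_pmf q) borel fst = pushf \<mu> f a" .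
  have d2: "distr (pushf \<mu> f a \<Otimes>\<^sub>M measure_pmf q) (count_space UNIV) snd = measure_pmf q"
  proof (rule measure_eqI)
    fix A assume "A \<in> sets (distr (pushf \<mu> f a \<Otimes>\<^sub>M measure_pmf q) (count_space UNIV) snd)"
    have "emeasure (distr (pushf \<mu> f a \<Otimes>\<^sub>M measure_pmf q) (count_space UNIV) snd) A
        = emeasure (pushf \<mu> f a \<Otimes>\<^sub>M measure_pmf q) (snd -` A \<inter> space (pushf \<mu> f a \<Otimes>\<^sub>M measure_pmf q))"
      by (rule emeasure_distr) (auto simp: measurable_cong_sets[OF s refl])
    also have "snd -` A \<inter> space (pushf \<mu> f a \<Otimes>\<^sub>M measure_pmf q) = UNIV \<times> A"
      by (auto simp: space_pair_measure)
    also have "emeasure (pushf \<mu> f a \<Otimes>\<^sub>M measure_pmf q) (UNIV \<times> A) = emeasure (pushf \<mu> f a) UNIV * emeasure (measure_pmf q) A"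
      by (subst sigma_finite_measure.emeasure_pair_measure_Times[OF prob_space_imp_sigma_finite[OF prob_space_measure_pmf]]) auto
    also have "\<dots> = emeasure (measure_pmf q) A" using P.emeasure_space_1 by simp
    finally show "emeasure (distr (pushf \<mu> f a \<Otimes>\<^sub>M measure_pmf q) (count_space UNIV) snd) A = emeasure (measure_pmf q) A" .
  qed simp
  show ?thesis using s d1 d2 by (simp add: couplings_def)
qed

lemma W1_approx:
  assumes a: "a < m" and rh: "set_pmf rh \<subseteq> RR a" and e: "e > 0"
  shows "\<exists>\<gamma>'. map_pmf fst \<gamma>' = rh \<and> map_pmf snd \<gamma>' = q \<and>
     cost \<gamma>' \<le> enn2real (W1 (pushf \<mu> f a) q) + e + (\<Sum>s\<in>RR a. \<bar>pmf rh s - rr a s\<bar>)"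
proof -
  let ?F = "\<lambda>\<gamma>. \<integral>\<^sup>+ z. ennreal (lab_cost (fst z) (snd z)) \<partial>\<gamma>"
  let ?V = "\<lambda>\<gamma>. (\<Sum>s\<in>RR a. \<Sum>y\<in>UNIV. lab_cost s y * measure \<gamma> {(s, y)})"
  define w where "w = W1 (pushf \<mu> f a) q"
  have w: "w = (INF \<gamma>\<in>couplings (pushf \<mu> f a) q. ?F \<gamma>)" by (simp add: w_def W1_def)
  have g0: "pushf \<mu> f a \<Otimes>\<^sub>M measure_pmf q \<in> couplings (pushf \<mu> f a) q" by (rule couplings_nonempty[OF a])
  have "w \<le> ?F (pushf \<mu> f a \<Otimes>\<^sub>M measure_pmf q)" unfolding w by (rule INF_lower[OF g0])
  also have "\<dots> = ennreal (?V (pushf \<mu> f a \<Otimes>\<^sub>M measure_pmf q))" by (rule coupling_facts(3)[OF a g0])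
  finally have wfin: "w < top" by (auto simp: top_unique less_le)
  hence "w < w + ennreal e" using e by (simp add: ennreal_less_top ennreal_add_left_cancel_less less_le)
  hence "(INF \<gamma>\<in>couplings (pushf \<mu> f a) q. ?F \<gamma>) < w + ennreal e" using w by simp
  then obtain \<gamma> where \<gamma>: "\<gamma> \<in> couplings (pushf \<mu> f a) q" "?F \<gamma> < w + ennreal e"
    by (auto simp: INF_less_iff)
  have ew: "ennreal (enn2real w) = w" using wfin by (simp add: less_top)
  have "ennreal (?V \<gamma>) < ennreal (enn2real w) + ennreal e"
    using \<gamma> coupling_facts(3)[OF a \<gamma>(1)] ew by simp
  also have "\<dots> = ennreal (enn2real w + e)" using e by (simp add: ennreal_plus)
  finally have Vl: "ennreal (?V \<gamma>) < ennreal (enn2real w + e)" .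
  have Vle: "?V \<gamma> < enn2real w + e"
  proof (rule ccontr)
    assume "\<not> ?V \<gamma> < enn2real w + e"
    hence "ennreal (enn2real w + e) \<le> ennreal (?V \<gamma>)" by (intro ennreal_leI) simp
    thus False using Vl by simp
  qed
  obtain \<gamma>' where \<gamma>': "map_pmf fst \<gamma>' = rh" "map_pmf snd \<gamma>' = q"
      "cost \<gamma>' \<le> ?V \<gamma> + (\<Sum>s\<in>RR a. \<bar>pmf rh s - rr a s\<bar>)"
    using construct_coupling[OF RR_fin[OF a] RR_simplex[OF a], where g="\<lambda>z. measure \<gamma> {z}" and r="rr a" and q=q and rh=rh]
      coupling_facts(1,2)[OF a \<gamma>(1)] rh by auto
  show ?thesis using \<gamma>' Vle by (intro exI[of _ \<gamma>']) (auto simp: w_def)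
qed

end


context fsetup begin

lemma m_pos: "m > 0"
proof (rule ccontr)
  assume "\<not> m > 0"
  hence "m = 0" by simp
  hence "space S0 = {}" by (simp add: space_pair_measure)
  hence "space \<mu> = {}" using space_mu by simp
  thus False using prob_space.not_empty[OF prob_mu] by simp
qed

lemma deterministic:
  assumes rhR: "\<forall>a<m. set_pmf (rh a) \<subseteq> RR a"
    and Dle: "\<forall>a<m. (\<Sum>s\<in>RR a. \<bar>pmf (rh a) s - rr a s\<bar>) \<le> B a"
    and opt: "is_opt rh m q \<gamma>"
  shows "(\<Sum>a<m. randErr \<mu> (hhat f rh \<gamma> y0) a) - errstar \<mu> f m \<le> (\<Sum>a<m. 3/2 * B a)"
    and "DPGap \<mu> (hhat f rh \<gamma> y0) m \<le> Max (B ` {..<m})"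
proof -
  define D where "D a = (\<Sum>s\<in>RR a. \<bar>pmf (rh a) s - rr a s\<bar>)" for a
  have feas: "feasible rh m q \<gamma>" using opt by (simp add: is_opt_def)
  have \<gamma>1: "map_pmf fst (\<gamma> a) = rh a" and \<gamma>2: "map_pmf snd (\<gamma> a) = q" if "a < m" for a
    using feas that by (auto simp: feasible_def)
  have finrh: "finite (set_pmf (rh a))" if "a < m" for a
    using rhR RR_fin that by (meson finite_subset)
  have err: "randErr \<mu> (hhat f rh \<gamma> y0) a \<le> cost (\<gamma> a) / 2 + D a" if a: "a < m" for a
    unfolding randErr_formula[where rh=rh and \<gamma>=\<gamma>, OF a finrh[OF a] \<gamma>1[OF a]] D_def
    using rhR a by (intro err_a RR_fin RR_simplex \<gamma>1) auto
  have costle: "(\<Sum>a<m. cost (\<gamma> a)) \<le> (\<Sum>a<m. enn2real (W1 (pushf \<mu> f a) q')) + (\<Sum>a<m. D a)" for q'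
  proof (rule field_le_epsilon)
    fix e :: real assume e: "0 < e"
    have "\<forall>a\<in>{..<m}. \<exists>g. map_pmf fst g = rh a \<and> map_pmf snd g = q' \<and>
        cost g \<le> enn2real (W1 (pushf \<mu> f a) q') + e / m + D a"
      using W1_approx[of _ "rh _" "e / m" q'] rhR e m_pos by (auto simp: D_def)
    then obtain \<gamma>' where \<gamma>': "\<And>a. a \<in> {..<m} \<Longrightarrow> map_pmf fst (\<gamma>' a) = rh a \<and> map_pmf snd (\<gamma>' a) = q' \<and>
        cost (\<gamma>' a) \<le> enn2real (W1 (pushf \<mu> f a) q') + e / m + D a"
      by metis
    have "feasible rh m q' \<gamma>'" using \<gamma>' by (auto simp: feasible_def)
    hence "transport_obj m \<gamma> \<le> transport_obj m \<gamma>'" using opt by (auto simp: is_opt_def)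
    hence "(\<Sum>a<m. cost (\<gamma> a)) \<le> (\<Sum>a<m. cost (\<gamma>' a))" by (simp add: transport_obj_cost)
    also have "\<dots> \<le> (\<Sum>a<m. enn2real (W1 (pushf \<mu> f a) q') + e / m + D a)"
      using \<gamma>' by (intro sum_mono) auto
    also have "\<dots> = (\<Sum>a<m. enn2real (W1 (pushf \<mu> f a) q')) + (\<Sum>a<m. D a) + e"
      using m_pos by (simp add: sum.distrib)
    finally show "(\<Sum>a<m. cost (\<gamma> a)) \<le> (\<Sum>a<m. enn2real (W1 (pushf \<mu> f a) q')) + (\<Sum>a<m. D a) + e" .
  qed
  have sumErr: "(\<Sum>a<m. randErr \<mu> (hhat f rh \<gamma> y0) a) \<le> (\<Sum>a<m. cost (\<gamma> a)) / 2 + (\<Sum>a<m. D a)"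
    using err by (subst sum_divide_distrib, subst sum.distrib[symmetric]) (intro sum_mono, auto)
  have "2 * (\<Sum>a<m. randErr \<mu> (hhat f rh \<gamma> y0) a) - 3 * (\<Sum>a<m. D a)
      \<le> (INF q'\<in>(UNIV :: 'k pmf set). \<Sum>a<m. enn2real (W1 (pushf \<mu> f a) q'))"
  proof (rule cINF_greatest)
    fix q' :: "'k pmf"
    show "2 * (\<Sum>a<m. randErr \<mu> (hhat f rh \<gamma> y0) a) - 3 * (\<Sum>a<m. D a) \<le> (\<Sum>a<m. enn2real (W1 (pushf \<mu> f a) q'))"
      using sumErr costle[of q'] by linarith
  qed simp
  hence "(\<Sum>a<m. randErr \<mu> (hhat f rh \<gamma> y0) a) - errstar \<mu> f m \<le> 3/2 * (\<Sum>a<m. D a)"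
    by (simp add: errstar_def)
  also have "\<dots> \<le> 3/2 * (\<Sum>a<m. B a)" using Dle by (intro mult_left_mono sum_mono) (auto simp: D_def)
  finally show "(\<Sum>a<m. randErr \<mu> (hhat f rh \<gamma> y0) a) - errstar \<mu> f m \<le> (\<Sum>a<m. 3/2 * B a)"
    by (simp add: sum_distrib_left)
  have dev: "(\<Sum>y\<in>UNIV. \<bar>predProb \<mu> (hhat f rh \<gamma> y0) a y - pmf q y\<bar>) \<le> Max (B ` {..<m})" if a: "a < m" for a
  proof -
    have "(\<Sum>y\<in>UNIV. \<bar>predProb \<mu> (hhat f rh \<gamma> y0) a y - pmf q y\<bar>) \<le> D a"
      unfolding predProb_formula[where rh=rh, OF a finrh[OF a]] D_def
      using rhR a by (intro dp_a RR_fin \<gamma>1 \<gamma>2) auto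
    also have "\<dots> \<le> B a" using Dle a by (simp add: D_def)
    also have "\<dots> \<le> Max (B ` {..<m})" using a by (intro Max_ge) auto
    finally show ?thesis .
  qed
  have "Max {(\<Sum>y\<in>UNIV. \<bar>predProb \<mu> (hhat f rh \<gamma> y0) a y - predProb \<mu> (hhat f rh \<gamma> y0) a' y\<bar>) | a a'. a < m \<and> a' < m}
        \<le> 2 * Max (B ` {..<m})"
  proof (subst Max_le_iff)
    have "{(\<Sum>y\<in>UNIV. \<bar>predProb \<mu> (hhat f rh \<gamma> y0) a y - predProb \<mu> (hhat f rh \<gamma> y0) a' y\<bar>) | a a'. a < m \<and> a' < m}
      = (\<lambda>(a, a'). (\<Sum>y\<in>UNIV. \<bar>predProb \<mu> (hhat f rh \<gamma> y0) a y - predProb \<mu> (hhat f rh \<gamma> y0) a' y\<bar>)) ` ({..<m} \<times> {..<m})"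
      by auto
    thus "finite {(\<Sum>y\<in>UNIV. \<bar>predProb \<mu> (hhat f rh \<gamma> y0) a y - predProb \<mu> (hhat f rh \<gamma> y0) a' y\<bar>) | a a'. a < m \<and> a' < m}"
      by simp
    show "{(\<Sum>y\<in>UNIV. \<bar>predProb \<mu> (hhat f rh \<gamma> y0) a y - predProb \<mu> (hhat f rh \<gamma> y0) a' y\<bar>) | a a'. a < m \<and> a' < m} \<noteq> {}"
      using m_pos by auto
    show "\<forall>x\<in>{(\<Sum>y\<in>UNIV. \<bar>predProb \<mu> (hhat f rh \<gamma> y0) a y - predProb \<mu> (hhat f rh \<gamma> y0) a' y\<bar>) | a a'. a < m \<and> a' < m}. x \<le> 2 * Max (B ` {..<m})"
    proof safe
      fix a a' assume a: "a < m" and a': "a' < m"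
      let ?P = "predProb \<mu> (hhat f rh \<gamma> y0)"
      have "(\<Sum>y\<in>UNIV. \<bar>?P a y - ?P a' y\<bar>) \<le> (\<Sum>y\<in>UNIV. \<bar>?P a y - pmf q y\<bar> + \<bar>?P a' y - pmf q y\<bar>)"
        by (intro sum_mono) linarith
      also have "\<dots> \<le> 2 * Max (B ` {..<m})" using dev[OF a] dev[OF a'] by (simp add: sum.distrib)
      finally show "(\<Sum>y\<in>UNIV. \<bar>?P a y - ?P a' y\<bar>) \<le> 2 * Max (B ` {..<m})" .
    qed
  qed
  thus "DPGap \<mu> (hhat f rh \<gamma> y0) m \<le> Max (B ` {..<m})" by (simp add: DPGap_def)
qed

end


lemma indep_proj_PiM:
  assumes P: "prob_space P" and I: "I \<noteq> {}"
  shows "prob_space.indep_vars (PiM I (\<lambda>_. P)) (\<lambda>_. P) (\<lambda>i x. x i) I"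
proof -
  interpret T: prob_space "PiM I (\<lambda>_. P)" using P by (intro prob_space_PiM) auto
  have rv: "\<And>i. i \<in> I \<Longrightarrow> (\<lambda>x. x i) \<in> measurable (PiM I (\<lambda>_. P)) P"
  proof -
    fix i assume "i \<in> I"
    thus "(\<lambda>x. x i) \<in> measurable (PiM I (\<lambda>_. P)) P" using measurable_component_singleton[of i I "\<lambda>_. P"] by simp
  qed
  have "distr (PiM I (\<lambda>_. P)) (\<Pi>\<^sub>M i\<in>I. P) (\<lambda>x. \<lambda>i\<in>I. x i) = distr (PiM I (\<lambda>_. P)) (\<Pi>\<^sub>M i\<in>I. P) (\<lambda>x. x)"
    by (intro distr_cong) (auto simp: space_PiM restrict_def PiE_def extensional_def)
  also have "\<dots> = PiM I (\<lambda>_. P)" by simp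
  also have "\<dots> = (\<Pi>\<^sub>M i\<in>I. distr (PiM I (\<lambda>_. P)) P (\<lambda>x. x i))"
    by (intro PiM_cong refl, rule distr_PiM_component[symmetric]) (use P in auto)
  finally show ?thesis using T.indep_vars_iff_distr_eq_PiM'[OF I rv] by simp
qed

lemma hoeff_prod:
  fixes P :: "(real^'k::finite) measure"
  assumes P: "prob_space P" and sP: "sets P = sets borel" and n: "n > 0" and e: "e \<ge> 0"
  shows "measure (PiM {..<n} (\<lambda>_. P)) {x\<in>space (PiM {..<n} (\<lambda>_. P)). e \<le> \<bar>(\<Sum>i<n. indicator {s} (x i)) / real n - measure P {s}\<bar>}
     \<le> 2 * exp (- 2 * real n * e\<^sup>2)"
proof -
  let ?T = "PiM {..<n} (\<lambda>_. P)"
  interpret T: prob_space ?T using P by (intro prob_space_PiM) auto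
  define X :: "nat \<Rightarrow> (nat \<Rightarrow> real^'k) \<Rightarrow> real" where "X = (\<lambda>i x. indicator {s} (x i))"
  define Y :: "(nat \<Rightarrow> real^'k) \<Rightarrow> real" where "Y = (\<lambda>x. indicator {s} (x 0))"
  have I: "{..<n} \<noteq> {}" using n by auto
  have ms: "indicator {s} \<in> borel_measurable P" using sP by (simp add: measurable_cong_sets[OF sP refl])
  have c0: "distr ?T P (\<lambda>x. x i) = P" if "i < n" for i by (rule distr_PiM_component) (use that P in auto)
  have dX: "distr ?T borel (X i) = distr P borel (indicator {s})" if "i < n" for i
  proof -
    have "distr ?T borel (X i) = distr (distr ?T P (\<lambda>x. x i)) borel (indicator {s})"
      using that ms by (subst distr_distr) (auto simp: X_def o_def)
    thus ?thesis using c0[OF that] by simp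
  qed
  have c0m: "(\<lambda>x. x 0) \<in> measurable ?T P"
    using measurable_component_singleton[of 0 "{..<n}" "\<lambda>_. P"] n by simp
  interpret H: Hoeffding_ineq_iid ?T "{..<n}" X Y 0 1 "measure P {s}"
  proof unfold_locales
    show "T.indep_vars (\<lambda>_. borel) X {..<n}"
      unfolding X_def using ms
      by (intro T.indep_vars_compose2[OF indep_proj_PiM[OF P I]]) auto
    show "distr ?T borel (X i) = distr ?T borel Y" if "i \<in> {..<n}" for i
      using dX[of i] dX[of 0] that n by (simp add: X_def Y_def)
    show "Y \<in> borel_measurable ?T"
      using measurable_compose[OF c0m ms] by (simp add: Y_def)
    show "AE x in ?T. Y x \<in> {0..1}" by (simp add: Y_def)
    have "T.expectation Y = (\<integral>x. indicator {s} x \<partial>distr ?T P (\<lambda>x. x 0))"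
      unfolding Y_def using ms c0m by (subst integral_distr) auto
    also have "\<dots> = measure P {s}" using c0[of 0] n sP by simp
    finally show "measure P {s} \<equiv> T.expectation Y" by simp
  qed auto
  have "T.prob {x\<in>space ?T. \<bar>(\<Sum>i\<in>{..<n}. X i x) / real (card {..<n}) - measure P {s}\<bar> \<ge> e}
      \<le> 2 * exp (-2 * real (card {..<n}) * e\<^sup>2 / (1 - 0)\<^sup>2)"
    by (rule H.Hoeffding_ineq_abs_ge'[OF e _ I]) simp
  thus ?thesis by (simp add: X_def)
qed



lemma pmf_rhat:
  assumes n: "n > 0"
  shows "pmf (rhat n \<omega> a) s = (\<Sum>i<n. indicator {s} (\<omega> a i)) / real n"
proof -
  have "pmf (rhat n \<omega> a) s = measure (pmf_of_set {..<n}) (\<omega> a -` {s})"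
    by (simp add: rhat_def pmf_map)
  also have "\<dots> = real (card ({..<n} \<inter> \<omega> a -` {s})) / real n"
    using n by (subst measure_pmf_of_set) auto
  also have "real (card ({..<n} \<inter> \<omega> a -` {s})) = (\<Sum>i<n. indicator {s} (\<omega> a i))"
  proof -
    have "(\<Sum>i<n. indicator {s} (\<omega> a i) :: real) = (\<Sum>i\<in>{..<n} \<inter> \<omega> a -` {s}. 1)"
      by (rule sum.mono_neutral_cong_right) (auto simp: indicator_def)
    thus ?thesis by simp
  qed
  finally show ?thesis .
qed

lemma set_rhat: "n > 0 \<Longrightarrow> set_pmf (rhat n \<omega> a) = \<omega> a ` {..<n}"
  unfolding rhat_def by (subst set_map_pmf, subst set_pmf_of_set) auto

context fsetup begin

abbreviation "TT (n::nat) a \<equiv> PiM {..<n} (\<lambda>_. pushf \<mu> f a)"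

lemma prob_TT: "a < m \<Longrightarrow> prob_space (TT n a)"
  using prob_P by (intro prob_space_PiM) auto

lemma SS_eq: "sample_space \<mu> f m n = PiM {..<m} (TT n)"
  by (simp add: sample_space_def)

lemma prob_SS: "prob_space (sample_space \<mu> f m n)"
  unfolding SS_eq by (rule prob_space_PiM) (rule prob_TT, simp)

lemma comp_measure:
  assumes a: "a < m" and A: "A \<in> sets (TT n a)"
  shows "measure (sample_space \<mu> f m n) {\<omega>\<in>space (sample_space \<mu> f m n). \<omega> a \<in> A} = measure (TT n a) A"
proof -
  have d: "distr (PiM {..<m} (TT n)) (TT n a) (\<lambda>\<omega>. \<omega> a) = TT n a"
    by (rule distr_PiM_component) (use a prob_TT in auto)
  have g: "(\<lambda>\<omega>. \<omega> a) \<in> measurable (PiM {..<m} (TT n)) (TT n a)"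
    using measurable_component_singleton[of a "{..<m}" "TT n"] a by simp
  have "measure (TT n a) A = measure (PiM {..<m} (TT n)) ((\<lambda>\<omega>. \<omega> a) -` A \<inter> space (PiM {..<m} (TT n)))"
    by (subst d[symmetric], rule measure_distr[OF g A])
  thus ?thesis unfolding SS_eq by (simp add: vimage_def Int_def conj_commute)
qed

lemma comp_sets:
  assumes a: "a < m" and A: "A \<in> sets (TT n a)"
  shows "{\<omega>\<in>space (sample_space \<mu> f m n). \<omega> a \<in> A} \<in> sets (sample_space \<mu> f m n)"
proof -
  have g: "(\<lambda>\<omega>. \<omega> a) \<in> measurable (PiM {..<m} (TT n)) (TT n a)"
    using measurable_component_singleton[of a "{..<m}" "TT n"] a by simp
  have "(\<lambda>\<omega>. \<omega> a) -` A \<inter> space (PiM {..<m} (TT n)) \<in> sets (PiM {..<m} (TT n))"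
    using measurable_sets[OF g A] .
  thus ?thesis unfolding SS_eq by (simp add: vimage_def Int_def conj_commute)
qed

lemma bad_in_null:
  assumes a: "a < m" and i: "i < n"
  shows "{x\<in>space (TT n a). x i \<notin> RR a} \<in> sets (TT n a)"
    and "measure (TT n a) {x\<in>space (TT n a). x i \<notin> RR a} = 0"
proof -
  have g: "(\<lambda>x. x i) \<in> measurable (TT n a) (pushf \<mu> f a)"
    using measurable_component_singleton[of i "{..<n}" "\<lambda>_. pushf \<mu> f a"] i by simp
  have d: "distr (TT n a) (pushf \<mu> f a) (\<lambda>x. x i) = pushf \<mu> f a"
    by (rule distr_PiM_component) (use i prob_P[OF a] in auto)
  have eq: "{x\<in>space (TT n a). x i \<notin> RR a} = (\<lambda>x. x i) -` (- RR a) \<inter> space (TT n a)" by auto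
  have B: "- RR a \<in> sets (pushf \<mu> f a)" using RR_closed[OF a] by auto
  show "{x\<in>space (TT n a). x i \<notin> RR a} \<in> sets (TT n a)" unfolding eq using measurable_sets[OF g B] .
  have "measure (pushf \<mu> f a) (- RR a) = measure (TT n a) ((\<lambda>x. x i) -` (- RR a) \<inter> space (TT n a))"
    by (subst d[symmetric], rule measure_distr[OF g B])
  thus "measure (TT n a) {x\<in>space (TT n a). x i \<notin> RR a} = 0"
    unfolding eq using null_compl[OF a] by (simp add: measure_def)
qed

lemma bad_dev_sets:
  assumes a: "a < m"
  shows "{x\<in>space (TT n a). e \<le> \<bar>(\<Sum>i<n. indicator {s} (x i)) / real n - rr a s\<bar>} \<in> sets (TT n a)"
proof -
  have "(\<lambda>x. x i) \<in> measurable (TT n a) borel" if "i < n" for i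
    using measurable_component_singleton[of i "{..<n}" "\<lambda>_. pushf \<mu> f a"] that
    by (simp add: measurable_cong_sets[OF refl sets_P])
  hence "(\<lambda>x. indicator {s} (x i) :: real) \<in> borel_measurable (TT n a)" if "i < n" for i
    using that by (intro borel_measurable_indicator' ) auto
  hence "(\<lambda>x. \<bar>(\<Sum>i<n. indicator {s} (x i)) / real n - rr a s\<bar>) \<in> borel_measurable (TT n a)"
    by (intro borel_measurable_abs borel_measurable_diff borel_measurable_divide borel_measurable_sum borel_measurable_const) auto
  thus ?thesis by measurable
qed

end


context fsetup begin

lemma good_event:
  assumes n: "n > 0" and e: "\<forall>a<m. e a \<ge> 0"
  shows "\<exists>E\<in>sets (sample_space \<mu> f m n).
     measure (sample_space \<mu> f m n) E \<ge> 1 - (\<Sum>a<m. real (card (RR a)) * (2 * exp (- 2 * real n * (e a)\<^sup>2))) \<and>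
     (\<forall>\<omega>\<in>E. \<forall>a<m. (\<forall>i<n. \<omega> a i \<in> RR a) \<and>
        (\<forall>s\<in>RR a. \<bar>(\<Sum>i<n. indicator {s} (\<omega> a i)) / real n - rr a s\<bar> < e a))"
proof -
  let ?S = "sample_space \<mu> f m n"
  interpret S: prob_space ?S by (rule prob_SS)
  define Bin where "Bin a i = {\<omega>\<in>space ?S. \<omega> a \<in> {x\<in>space (TT n a). x i \<notin> RR a}}" for a i
  define Bd where "Bd a s = {\<omega>\<in>space ?S. \<omega> a \<in> {x\<in>space (TT n a). e a \<le> \<bar>(\<Sum>i<n. indicator {s} (x i)) / real n - rr a s\<bar>}}" for a s
  define U where "U a = (\<Union>i\<in>{..<n}. Bin a i) \<union> (\<Union>s\<in>RR a. Bd a s)" for a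
  define E where "E = space ?S - (\<Union>a\<in>{..<m}. U a)"
  have sBin: "Bin a i \<in> sets ?S" if "a < m" "i < n" for a i
    unfolding Bin_def using that by (intro comp_sets bad_in_null(1))
  have sBd: "Bd a s \<in> sets ?S" if "a < m" for a s
    unfolding Bd_def using that by (intro comp_sets bad_dev_sets)
  have sU: "U a \<in> sets ?S" if "a < m" for a
    unfolding U_def using that RR_fin[OF that] sBin sBd by (intro sets.Un sets.finite_UN) auto
  have sUU: "(\<Union>a\<in>{..<m}. U a) \<in> sets ?S" using sU by (intro sets.finite_UN) auto
  have sE: "E \<in> sets ?S" unfolding E_def using sUU by auto
  have mBin: "measure ?S (Bin a i) = 0" if "a < m" "i < n" for a i
    unfolding Bin_def using that comp_measure[OF that(1) bad_in_null(1)[OF that]] bad_in_null(2)[OF that] by simp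
  have mBd: "measure ?S (Bd a s) \<le> 2 * exp (- 2 * real n * (e a)\<^sup>2)" if "a < m" for a s
  proof -
    have "measure ?S (Bd a s) = measure (TT n a) {x\<in>space (TT n a). e a \<le> \<bar>(\<Sum>i<n. indicator {s} (x i)) / real n - rr a s\<bar>}"
      unfolding Bd_def using that by (intro comp_measure bad_dev_sets)
    also have "\<dots> \<le> 2 * exp (- 2 * real n * (e a)\<^sup>2)"
      unfolding rr_def using that e n by (intro hoeff_prod prob_P) auto
    finally show ?thesis .
  qed
  have mU: "measure ?S (U a) \<le> real (card (RR a)) * (2 * exp (- 2 * real n * (e a)\<^sup>2))" if a: "a < m" for a
  proof -
    have "measure ?S (U a) \<le> measure ?S (\<Union>i\<in>{..<n}. Bin a i) + measure ?S (\<Union>s\<in>RR a. Bd a s)"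
      unfolding U_def using a RR_fin[OF a] sBin sBd by (intro measure_Un_le sets.finite_UN) auto
    also have "measure ?S (\<Union>i\<in>{..<n}. Bin a i) \<le> (\<Sum>i<n. measure ?S (Bin a i))"
      using a sBin by (intro measure_UNION_le) auto
    also have "(\<Sum>i<n. measure ?S (Bin a i)) = 0" using a mBin by simp
    also have "measure ?S (\<Union>s\<in>RR a. Bd a s) \<le> (\<Sum>s\<in>RR a. measure ?S (Bd a s))"
      using a sBd RR_fin[OF a] by (intro measure_UNION_le) auto
    also have "\<dots> \<le> (\<Sum>s\<in>RR a. 2 * exp (- 2 * real n * (e a)\<^sup>2))"
      using a mBd by (intro sum_mono) auto
    finally show ?thesis by simp
  qed
  have "measure ?S (\<Union>a\<in>{..<m}. U a) \<le> (\<Sum>a<m. measure ?S (U a))"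
    using sU by (intro measure_UNION_le) auto
  also have "\<dots> \<le> (\<Sum>a<m. real (card (RR a)) * (2 * exp (- 2 * real n * (e a)\<^sup>2)))"
    using mU by (intro sum_mono) auto
  finally have mUU: "measure ?S (\<Union>a\<in>{..<m}. U a) \<le> (\<Sum>a<m. real (card (RR a)) * (2 * exp (- 2 * real n * (e a)\<^sup>2)))" .
  have "measure ?S E = 1 - measure ?S (\<Union>a\<in>{..<m}. U a)"
    unfolding E_def using sUU by (rule S.prob_compl)
  hence mE: "measure ?S E \<ge> 1 - (\<Sum>a<m. real (card (RR a)) * (2 * exp (- 2 * real n * (e a)\<^sup>2)))"
    using mUU by simp
  have good: "(\<forall>i<n. \<omega> a i \<in> RR a) \<and> (\<forall>s\<in>RR a. \<bar>(\<Sum>i<n. indicator {s} (\<omega> a i)) / real n - rr a s\<bar> < e a)"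
    if \<omega>: "\<omega> \<in> E" and a: "a < m" for \<omega> a
  proof -
    have sp: "\<omega> \<in> space ?S" and nU: "\<omega> \<notin> U a" using \<omega> a by (auto simp: E_def)
    have "\<omega> a \<in> space (TT n a)" using sp a by (auto simp: SS_eq space_PiM PiE_def Pi_def)
    thus ?thesis using nU sp by (auto simp: U_def Bin_def Bd_def not_le)
  qed
  show ?thesis using sE mE good by blast
qed

end


lemma sqrt_scale: "x \<ge> 0 \<Longrightarrow> x * sqrt y = sqrt (x\<^sup>2 * y)"
  by (simp add: real_sqrt_mult)

theorem theorem4p1:
  fixes \<mu> :: "('x::polish_space \<times> 'k::finite \<times> nat) measure"
    and m n :: nat and f :: "'x \<Rightarrow> nat \<Rightarrow> real^'k" and y0 :: 'k and \<delta> :: real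
  assumes "CARD('k) \<ge> 2"
    and "classif_problem \<mu> m"
    and "\<forall>a<m. (\<lambda>x. f x a) \<in> borel_measurable borel"
    and "\<forall>x. \<forall>a<m. f x a \<in> prob_simplex"
    and "calibrated \<mu> f m"
    and "\<forall>a<m. finite (msupport (pushf \<mu> f a))"
    and "n > 0"
    and "0 < \<delta>" and "\<delta> < 1"
  shows "\<exists>E\<in>sets (sample_space \<mu> f m n).
           measure (sample_space \<mu> f m n) E \<ge> 1 - \<delta> \<and>
           (\<forall>\<omega>\<in>E. \<forall>q \<gamma>. is_opt (rhat n \<omega>) m q \<gamma> \<longrightarrow>
              (\<Sum>a<m. randErr \<mu> (hhat f (rhat n \<omega>) \<gamma> y0) a) - errstar \<mu> f m
                \<le> (\<Sum>a<m. sqrt (2 * real (card (msupport (pushf \<mu> f a)))^2 / real n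
                        * ln (2 * real m * real (card (msupport (pushf \<mu> f a))) / \<delta>)))
              \<and> DPGap \<mu> (hhat f (rhat n \<omega>) \<gamma> y0) m
                \<le> Max ((\<lambda>a. sqrt (real (card (msupport (pushf \<mu> f a)))^2 / (2 * real n)
                        * ln (2 * real m * real (card (msupport (pushf \<mu> f a))) / \<delta>))) ` {..<m}))"
proof -
  interpret fsetup \<mu> m f using assms by unfold_locales auto
  have n: "n > 0" and d0: "0 < \<delta>" and d1: "\<delta> < 1" using assms by auto
  define c where "c a = real (card (RR a))" for a
  define L where "L a = ln (2 * real m * c a / \<delta>)" for a
  define e where "e a = sqrt (L a / (2 * real n))" for a
  have cpos: "c a \<ge> 1" if a: "a < m" for a
  proof -
    have "RR a \<noteq> {}" using sum_rr[OF a] by auto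
    hence "card (RR a) > 0" using RR_fin[OF a] by (simp add: card_gt_0_iff)
    thus ?thesis by (simp add: c_def)
  qed
  have mpos: "real m \<ge> 1" using m_pos by simp
  have arg: "2 * real m * c a / \<delta> > 1" if a: "a < m" for a
  proof -
    have "1 * 1 \<le> real m * c a" by (rule mult_mono) (use cpos[OF a] mpos in auto)
    hence "2 * real m * c a \<ge> 2" by simp
    hence "2 * real m * c a > \<delta>" using d1 by linarith
    thus ?thesis using d0 by simp
  qed
  have L0: "L a \<ge> 0" if "a < m" for a using arg[OF that] by (simp add: L_def)
  have e0: "\<forall>a<m. e a \<ge> 0" using L0 by (simp add: e_def)
  have esq: "(e a)\<^sup>2 = L a / (2 * real n)" if "a < m" for a using L0[OF that] n by (simp add: e_def)
  have termeq: "real (card (RR a)) * (2 * exp (- 2 * real n * (e a)\<^sup>2)) = \<delta> / real m" if a: "a < m" for a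
  proof -
    have "- 2 * real n * (e a)\<^sup>2 = - L a" using esq[OF a] n by simp
    hence "exp (- 2 * real n * (e a)\<^sup>2) = 1 / (2 * real m * c a / \<delta>)"
      using arg[OF a] by (simp add: L_def exp_minus)
    thus ?thesis using cpos[OF a] mpos d0 by (simp add: c_def field_simps)
  qed
  have "(\<Sum>a<m. real (card (RR a)) * (2 * exp (- 2 * real n * (e a)\<^sup>2))) = (\<Sum>a<m. \<delta> / real m)"
    using termeq by simp
  also have "\<dots> = \<delta>" using mpos by simp
  finally have tot: "(\<Sum>a<m. real (card (RR a)) * (2 * exp (- 2 * real n * (e a)\<^sup>2))) = \<delta>" .
  obtain E where E: "E \<in> sets (sample_space \<mu> f m n)"
    "measure (sample_space \<mu> f m n) E \<ge> 1 - (\<Sum>a<m. real (card (RR a)) * (2 * exp (- 2 * real n * (e a)\<^sup>2)))"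
    "\<forall>\<omega>\<in>E. \<forall>a<m. (\<forall>i<n. \<omega> a i \<in> RR a) \<and>
        (\<forall>s\<in>RR a. \<bar>(\<Sum>i<n. indicator {s} (\<omega> a i)) / real n - rr a s\<bar> < e a)"
    using good_event[OF n e0] by blast
  define B where "B a = c a * e a" for a
  have B1: "B a = sqrt (real (card (msupport (pushf \<mu> f a)))^2 / (2 * real n)
                        * ln (2 * real m * real (card (msupport (pushf \<mu> f a))) / \<delta>))" if a: "a < m" for a
    unfolding B_def e_def L_def c_def RR_def using cpos[OF a]
    by (subst sqrt_scale) (auto simp: c_def RR_def field_simps)
  have B2: "3/2 * B a \<le> sqrt (2 * real (card (msupport (pushf \<mu> f a)))^2 / real n
                        * ln (2 * real m * real (card (msupport (pushf \<mu> f a))) / \<delta>))" if a: "a < m" for a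
  proof -
    have "3/2 * B a \<le> 2 * B a" using cpos[OF a] e0 a by (simp add: B_def)
    also have "2 * B a = sqrt (2 * real (card (msupport (pushf \<mu> f a)))^2 / real n
                        * ln (2 * real m * real (card (msupport (pushf \<mu> f a))) / \<delta>))"
      unfolding B1[OF a] by (subst sqrt_scale) (auto simp: field_simps power2_eq_square)
    finally show ?thesis .
  qed
  show ?thesis
  proof (intro bexI[OF _ E(1)] conjI ballI allI impI)
    show "measure (sample_space \<mu> f m n) E \<ge> 1 - \<delta>" using E(2) tot by simp
    fix \<omega> q \<gamma> assume \<omega>: "\<omega> \<in> E" and opt: "is_opt (rhat n \<omega>) m q \<gamma>"
    have rhR: "\<forall>a<m. set_pmf (rhat n \<omega> a) \<subseteq> RR a"
      using E(3) \<omega> n by (auto simp: set_rhat)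
    have Dle: "\<forall>a<m. (\<Sum>s\<in>RR a. \<bar>pmf (rhat n \<omega> a) s - rr a s\<bar>) \<le> B a"
    proof safe
      fix a assume a: "a < m"
      have "(\<Sum>s\<in>RR a. \<bar>pmf (rhat n \<omega> a) s - rr a s\<bar>) \<le> (\<Sum>s\<in>RR a. e a)"
        using E(3) \<omega> a by (intro sum_mono) (auto simp: pmf_rhat[OF n] less_imp_le)
      thus "(\<Sum>s\<in>RR a. \<bar>pmf (rhat n \<omega> a) s - rr a s\<bar>) \<le> B a" by (simp add: B_def c_def)
    qed
    note det = deterministic[OF rhR Dle opt, of y0]
    show "(\<Sum>a<m. randErr \<mu> (hhat f (rhat n \<omega>) \<gamma> y0) a) - errstar \<mu> f m
                \<le> (\<Sum>a<m. sqrt (2 * real (card (msupport (pushf \<mu> f a)))^2 / real n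
                        * ln (2 * real m * real (card (msupport (pushf \<mu> f a))) / \<delta>)))"
      using det(1) B2 by (meson order.trans sum_mono lessThan_iff)
    have "Max (B ` {..<m}) = Max ((\<lambda>a. sqrt (real (card (msupport (pushf \<mu> f a)))^2 / (2 * real n)
                        * ln (2 * real m * real (card (msupport (pushf \<mu> f a))) / \<delta>))) ` {..<m})"
      using B1 by (intro arg_cong[where f=Max] image_cong) auto
    thus "DPGap \<mu> (hhat f (rhat n \<omega>) \<gamma> y0) m
                \<le> Max ((\<lambda>a. sqrt (real (card (msupport (pushf \<mu> f a)))^2 / (2 * real n)
                        * ln (2 * real m * real (card (msupport (pushf \<mu> f a))) / \<delta>))) ` {..<m})"
      using det(2) by simp
  qed
qed


end
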